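(* Let $K$ be a sequence of positive integers approaching $\infty$. Then $K$ has continuous leading block distribution under $\mathcal F$-expansion if and only if there is a uniform continuation $f$ of $F$ such that $\{f^{-1}(K_n)\}$ is equidistributed.
   Context: $F$: $F_1=1,F_2=2,F_{n+2}=F_{n+1}+F_n$; $\phi$ golden ratio, $\omega=\phi^{-1}$. Zeckendorf expansion $m=\sum_{k=1}^M\epsilon(k)F_{M-k+1}$ (unique, $\epsilon(k)\in\{0,1\}$, $\epsilon(1)=1$, $\epsilon(k)\epsilon(k+1)=0$); $\mathrm{LB}_s(m)=(\epsilon(1),\dots,\epsilon(s))$ if $M\ge s$. Blocks of equal length are compared lexicographically. $\mathcal F^*$: infinite 0/1 sequences $\mu$ with $\mu(k)\mu(k+1)=0$ and no tail equal to $(1,0,1,0,\dots)$; $\mu|s=(\mu(1),\dots,\mu(s))$, $\mu\cdot\widehat F=\sum_{k\ge1}\mu(k)\omega^{k-1}$; $\mu\mapsto\phi(\mu\cdot\widehat F-1)$ is a bijection from $\{\mu\in\mathcal F^*:\mu(1)=1\}$ onto $(0,1)$. $K$ has continuous leading block distribution under $\mathcal F$-expansion if: for every $s\ge2$ and leading block $\mathbf b$ of length $s$ the limit $\lim_n\#\{k\le n:\mathrm{LB}_s(K_k)=\mathbf b\}/n$ exists; for every $\mu\in\mathcal F^*$ with $\mu(1)=1$, $\lim_{s\to\infty}\lim_n\#\{k\le n:\mathrm{LB}_s(K_k)\le\mu|s\}/n$ exists; and $f_K^*:[0,1]\to[0,1]$ with $f_K^*(0)=0$, $f_K^*(1)=1$,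 $f_K^*(\phi(\mu\cdot\widehat F-1))=$ that limit, is continuous and increasing. A uniform continuation of $F$ is an increasing continuous $f:[1,\infty)\to\mathbb{R}$ with $f(n)=F_n$ such that $f_n(p)=\frac{f(n+p)-f(n)}{f(n+1)-f(n)}$ converges uniformly on $[0,1]$ to an increasing continuous function. $\{x_n\}$ equidistributed means $\lim_n\#\{k\le n:\{x_k\}\le\beta\}/n=\beta$ for all $\beta\in[0,1]$. *)

theory Defs
  imports "HOL-Analysis.Analysis"
begin

text \<open>Fibonacci numbers F with F_1 = 1, F_2 = 2, F_(n+2) = F_(n+1) + F_n
  (F_0 = 1 is forced by the recurrence and never used).\<close>
fun FF :: "nat \<Rightarrow> nat" where
  "FF 0 = 1"
| "FF (Suc 0) = 1"
| "FF (Suc (Suc n)) = FF (Suc n) + FF n"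

definition gphi :: real where "gphi = (1 + sqrt 5) / 2"
definition gomega :: real where "gomega = 1 / gphi"

text \<open>A list xs = [eps(1), ..., eps(M)] is the Zeckendorf expansion of m:
  m = sum_{k=1}^M eps(k) F_(M-k+1) (xs ! i = eps(i+1)).\<close>
definition is_zeck :: "nat list \<Rightarrow> nat \<Rightarrow> bool" where
  "is_zeck xs m \<longleftrightarrow> xs \<noteq> [] \<and> hd xs = 1 \<and> set xs \<subseteq> {0, 1} \<and>
     (\<forall>i. Suc i < length xs \<longrightarrow> xs ! i * xs ! Suc i = 0) \<and>
     m = (\<Sum>i<length xs. xs ! i * FF (length xs - i))"

definition zeck :: "nat \<Rightarrow> nat list" where
  "zeck m = (THE xs. is_zeck xs m)"

definition has_LB :: "nat \<Rightarrow> nat \<Rightarrow> nat list \<Rightarrow> bool" where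
  "has_LB s m b \<longleftrightarrow> s \<le> length (zeck m) \<and> take s (zeck m) = b"

definition is_leading_block :: "nat \<Rightarrow> nat list \<Rightarrow> bool" where
  "is_leading_block s b \<longleftrightarrow> (\<exists>m. m > 0 \<and> has_LB s m b)"

definition lex_le :: "nat list \<Rightarrow> nat list \<Rightarrow> bool" where
  "lex_le xs ys \<longleftrightarrow> xs = ys \<or>
     (\<exists>i < min (length xs) (length ys). take i xs = take i ys \<and> xs ! i < ys ! i)"

text \<open>The set F*: sequences mu(1), mu(2), ... (mu 0 is ignored).\<close>
definition Fstar :: "(nat \<Rightarrow> nat) set" where
  "Fstar = {\<mu>. (\<forall>k\<ge>1. \<mu> k \<in> {0, 1}) \<and> (\<forall>k\<ge>1. \<mu> k * \<mu> (Suc k) = 0) \<and>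
      \<not> (\<exists>j\<ge>1. \<forall>i. \<mu> (j + i) = (if even i then 1 else 0))}"

definition restr :: "(nat \<Rightarrow> nat) \<Rightarrow> nat \<Rightarrow> nat list" where
  "restr \<mu> s = map \<mu> [1..<Suc s]"

definition dotF :: "(nat \<Rightarrow> nat) \<Rightarrow> real" where
  "dotF \<mu> = (\<Sum>k. real (\<mu> (Suc k)) * gomega ^ k)"

definition LB_prop :: "(nat \<Rightarrow> nat) \<Rightarrow> nat \<Rightarrow> (nat list \<Rightarrow> bool) \<Rightarrow> nat \<Rightarrow> real" where
  "LB_prop K s P n =
     real (card {k \<in> {1..n}. s \<le> length (zeck (K k)) \<and> P (take s (zeck (K k)))}) / real n"

definition cont_LB_dist :: "(nat \<Rightarrow> nat) \<Rightarrow> bool" where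
  "cont_LB_dist K \<longleftrightarrow>
     (\<forall>s\<ge>2. \<forall>b. is_leading_block s b \<longrightarrow> convergent (LB_prop K s (\<lambda>x. x = b))) \<and>
     (\<forall>\<mu>\<in>Fstar. \<mu> 1 = 1 \<longrightarrow>
        convergent (\<lambda>s. lim (LB_prop K s (\<lambda>x. lex_le x (restr \<mu> s))))) \<and>
     (\<exists>g :: real \<Rightarrow> real. g 0 = 0 \<and> g 1 = 1 \<and>
        (\<forall>\<mu>\<in>Fstar. \<mu> 1 = 1 \<longrightarrow>
           g (gphi * (dotF \<mu> - 1)) = lim (\<lambda>s. lim (LB_prop K s (\<lambda>x. lex_le x (restr \<mu> s))))) \<and>
        continuous_on {0..1} g \<and> strict_mono_on {0..1} g \<and> g ` {0..1} \<subseteq> {0..1})"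

definition uniform_continuation :: "(real \<Rightarrow> real) \<Rightarrow> bool" where
  "uniform_continuation f \<longleftrightarrow>
     strict_mono_on {1..} f \<and> continuous_on {1..} f \<and>
     (\<forall>n::nat. n \<ge> 1 \<longrightarrow> f (real n) = real (FF n)) \<and>
     (\<exists>h :: real \<Rightarrow> real.
        uniform_limit {0..1}
          (\<lambda>n p. (f (real n + p) - f (real n)) / (f (real n + 1) - f (real n))) h sequentially \<and>
        strict_mono_on {0..1} h \<and> continuous_on {0..1} h)"

definition equidistributed :: "(nat \<Rightarrow> real) \<Rightarrow> bool" where
  "equidistributed x \<longleftrightarrow>
     (\<forall>\<beta>\<in>{0..1}. (\<lambda>n. real (card {k \<in> {1..n}. frac (x k) \<le> \<beta>}) / real n) \<longlonglongrightarrow> \<beta>)"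

end

theory Submission
  imports Defs
begin

fun zw :: "nat list \<Rightarrow> bool" where
  "zw [] = True"
| "zw [x] = (x \<le> 1)"
| "zw (x # y # xs) = (x \<le> 1 \<and> x * y = 0 \<and> zw (y # xs))"

fun zval :: "nat list \<Rightarrow> nat" where
  "zval [] = 0"
| "zval (x # xs) = x * FF (Suc (length xs)) + zval xs"

lemma FF_pos: "FF n \<ge> 1"
  by (induction n rule: FF.induct) auto

lemma FF_pos': "0 < FF n"
  using FF_pos[of n] by simp

lemma FF_Suc_mono: "FF n \<le> FF (Suc n)"
  by (induction n rule: FF.induct) (auto simp: FF_pos)

lemma FF_mono: "m \<le> n \<Longrightarrow> FF m \<le> FF n"
  by (induction n) (auto simp: le_Suc_eq intro: order_trans[OF _ FF_Suc_mono])

lemma FF_strict: "1 \<le> m \<Longrightarrow> m < n \<Longrightarrow> FF m < FF n"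
proof (induction n)
  case 0 then show ?case by simp
next
  case (Suc n)
  have "FF n < FF (Suc n)" using Suc.prems
    by (cases n) (auto simp: FF_pos')
  then show ?case using Suc by (metis less_SucE order.strict_trans)
qed

lemma FF_ge: "FF n \<ge> n"
proof (induction n rule: FF.induct)
  case (3 n) then show ?case using FF_pos[of n] by simp
qed auto

lemma FF_rec: "1 \<le> n \<Longrightarrow> FF (Suc n) = FF n + FF (n - 1)"
  by (cases n) auto

lemma zw_tl: "zw (x # xs) \<Longrightarrow> zw xs"
  by (cases xs) auto

lemma zw_le1: "zw xs \<Longrightarrow> x \<in> set xs \<Longrightarrow> x \<le> 1"
  by (induction xs rule: zw.induct) auto

lemma zval_bound: "zw xs \<Longrightarrow> zval xs < FF (Suc (length xs))"
proof (induction "length xs" arbitrary: xs rule: less_induct)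
  case less
  show ?case
  proof (cases xs)
    case Nil then show ?thesis by simp
  next
    case (Cons x ys)
    show ?thesis
    proof (cases ys)
      case Nil then show ?thesis using less.prems Cons by simp
    next
      case (Cons y zs)
      have x: "x \<le> 1" and xy: "x * y = 0" and w: "zw (y # zs)" and wz: "zw zs"
        using less.prems \<open>xs = x # ys\<close> Cons zw_tl by auto
      have IH1: "zval (y # zs) < FF (Suc (length (y # zs)))"
        using less.hyps[of "y # zs"] w \<open>xs = x # ys\<close> Cons by auto
      have IH2: "zval zs < FF (Suc (length zs))"
        using less.hyps[of zs] wz \<open>xs = x # ys\<close> Cons by auto
      show ?thesis
      proof (cases "x = 0")
        case True then show ?thesis using IH1 FF_Suc_mono[of "Suc (length (y#zs))"] \<open>xs = x # ys\<close> Cons by simp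
      next
        case False
        then have "x = 1" "y = 0" using x xy by auto
        then show ?thesis using IH2 \<open>xs = x # ys\<close> Cons by simp
      qed
    qed
  qed
qed

lemma zval_app: "zval (xs @ ys) = zval (xs @ replicate (length ys) 0) + zval ys"
proof (induction xs)
  case Nil
  have "zval (replicate n 0) = 0" for n by (induction n) auto
  then show ?case by simp
qed auto

lemma zw_unique: "zw xs \<Longrightarrow> zw ys \<Longrightarrow> length xs = length ys \<Longrightarrow> zval xs = zval ys \<Longrightarrow> xs = ys"
proof (induction xs arbitrary: ys)
  case Nil then show ?case by simp
next
  case (Cons x xs)
  then obtain y ys' where ys: "ys = y # ys'" by (cases ys) auto
  have wx: "zw xs" and wy: "zw ys'" using Cons zw_tl ys by auto
  have x1: "x \<le> 1" and y1: "y \<le> 1" using Cons ys zw_le1 by auto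
  have L: "length xs = length ys'" using Cons ys by simp
  show ?case
  proof (cases "x = y")
    case True then show ?thesis using Cons.IH[OF wx wy L] Cons.prems ys by simp
  next
    case False
    then have "(x = 0 \<and> y = 1) \<or> (x = 1 \<and> y = 0)" using x1 y1 by auto
    then show ?thesis using zval_bound[OF wx] zval_bound[OF wy] Cons.prems ys L by auto
  qed
qed

lemma zw_less: "zw xs \<Longrightarrow> zw ys \<Longrightarrow> length xs = length ys \<Longrightarrow> i < length xs \<Longrightarrow>
   take i xs = take i ys \<Longrightarrow> xs ! i < ys ! i \<Longrightarrow> zval xs < zval ys"
proof (induction xs arbitrary: ys i)
  case Nil then show ?case by simp
next
  case (Cons x xs)
  then obtain y ys' where ys: "ys = y # ys'" by (cases ys) auto
  have wx: "zw xs" and wy: "zw ys'" using Cons zw_tl ys by auto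
  have x1: "x \<le> 1" and y1: "y \<le> 1" using Cons ys zw_le1 by auto
  have L: "length xs = length ys'" using Cons ys by simp
  show ?case
  proof (cases i)
    case 0
    then have "x = 0" "y = 1" using Cons.prems ys y1 by auto
    then show ?thesis using zval_bound[OF wx] L ys by simp
  next
    case (Suc j)
    then have "x = y" "zval xs < zval ys'" using Cons.prems ys
      by (auto intro!: Cons.IH[OF wx wy L, of j])
    then show ?thesis using ys L by simp
  qed
qed

lemma zw_exists: "m < FF (Suc n) \<Longrightarrow> \<exists>xs. zw xs \<and> length xs = n \<and> zval xs = m"
proof (induction n arbitrary: m rule: less_induct)
  case (less n)
  show ?case
  proof (cases n)
    case 0 then show ?thesis using less.prems by (auto intro!: exI[of _ "[]"])
  next
    case (Suc k)
    show ?thesis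
    proof (cases "m < FF (Suc k)")
      case True
      then obtain xs where xs: "zw xs" "length xs = k" "zval xs = m" using less.IH[of k m] Suc by auto
      have "zw (0 # xs)" using xs by (cases xs) auto
      then show ?thesis using xs Suc by (auto intro!: exI[of _ "0 # xs"])
    next
      case False
      then have r: "m - FF (Suc k) < FF k" using less.prems Suc by (cases k) auto
      show ?thesis
      proof (cases k)
        case 0 then show ?thesis using r False Suc by (auto intro!: exI[of _ "[1]"])
      next
        case (Suc j)
        then obtain xs where xs: "zw xs" "length xs = j" "zval xs = m - FF (Suc k)"
          using less.IH[of j "m - FF (Suc k)"] r \<open>n = Suc k\<close> by auto
        have "zw (1 # 0 # xs)" using xs by (cases xs) auto
        then show ?thesis using xs Suc \<open>n = Suc k\<close> False
          by (auto intro!: exI[of _ "1 # 0 # xs"])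
      qed
    qed
  qed
qed

lemma zval_sum: "zval xs = (\<Sum>i<length xs. xs ! i * FF (length xs - i))"
proof (induction xs)
  case (Cons x xs)
  show ?case
    unfolding length_Cons sum.lessThan_Suc_shift using Cons by simp
qed simp

lemma zw_iff: "zw xs \<longleftrightarrow> set xs \<subseteq> {0, 1} \<and> (\<forall>i. Suc i < length xs \<longrightarrow> xs ! i * xs ! Suc i = 0)"
proof (induction xs rule: zw.induct)
  case (3 x y xs)
  have "(\<forall>i. Suc i < length (x # y # xs) \<longrightarrow> (x # y # xs) ! i * (x # y # xs) ! Suc i = 0)
     \<longleftrightarrow> x * y = 0 \<and> (\<forall>i. Suc i < length (y # xs) \<longrightarrow> (y # xs) ! i * (y # xs) ! Suc i = 0)"
    (is "?L \<longleftrightarrow> ?R")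
  proof
    assume ?L
    then show ?R by (auto elim: allE[of _ 0] allE[of _ "Suc i" for i])
  next
    assume R: ?R
    show ?L
    proof (intro allI impI)
      fix i assume "Suc i < length (x # y # xs)"
      then show "(x # y # xs) ! i * (x # y # xs) ! Suc i = 0" using R by (cases i) auto
    qed
  qed
  then show ?case using 3 by auto
qed auto

lemma is_zeck_iff: "is_zeck xs m \<longleftrightarrow> zw xs \<and> xs \<noteq> [] \<and> hd xs = 1 \<and> zval xs = m"
  unfolding is_zeck_def zw_iff zval_sum by auto

lemma zw_dropWhile: "zw xs \<Longrightarrow> zw (dropWhile (\<lambda>x. x = 0) xs)"
  by (induction xs) (auto dest: zw_tl)

lemma zval_dropWhile: "zval (dropWhile (\<lambda>x. x = 0) xs) = zval xs"
  by (induction xs) auto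

lemma zval_pos_len: "zw xs \<Longrightarrow> xs \<noteq> [] \<Longrightarrow> hd xs = 1 \<Longrightarrow> FF (length xs) \<le> zval xs"
  by (cases xs) auto

lemma len_det: "zw xs \<Longrightarrow> xs \<noteq> [] \<Longrightarrow> hd xs = 1 \<Longrightarrow> 1 \<le> N \<Longrightarrow> FF N \<le> zval xs \<Longrightarrow> zval xs < FF (Suc N) \<Longrightarrow> length xs = N"
proof -
  assume a: "zw xs" "xs \<noteq> []" "hd xs = 1" "1 \<le> N" "FF N \<le> zval xs" "zval xs < FF (Suc N)"
  have l1: "1 \<le> length xs" using a by (cases xs) auto
  have b1: "FF (length xs) \<le> zval xs" using zval_pos_len a by auto
  have b2: "zval xs < FF (Suc (length xs))" using zval_bound a by auto
  show ?thesis
  proof (rule ccontr)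
    assume "length xs \<noteq> N"
    then have "length xs < N \<or> N < length xs" by auto
    then show False
    proof
      assume "length xs < N"
      then have "FF (Suc (length xs)) \<le> FF N" using FF_mono by auto
      then show False using a b2 by auto
    next
      assume "N < length xs"
      then have "FF (Suc N) \<le> FF (length xs)" using FF_mono by auto
      then show False using a b1 by auto
    qed
  qed
qed

lemma zeck_exists: "1 \<le> m \<Longrightarrow> \<exists>xs. zw xs \<and> xs \<noteq> [] \<and> hd xs = 1 \<and> zval xs = m"
proof -
  assume m: "1 \<le> m"
  have "m < FF (Suc m)" using FF_ge[of "Suc m"] by simp
  then obtain xs where xs: "zw xs" "zval xs = m" using zw_exists by blast
  let ?ys = "dropWhile (\<lambda>x. x = 0) xs"
  have w: "zw ?ys" "zval ?ys = m" using xs zw_dropWhile zval_dropWhile by auto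
  have ne: "?ys \<noteq> []"
  proof
    assume "?ys = []" then have "zval ?ys = 0" by (metis zval.simps(1))
    then show False using w m by simp
  qed
  then have "hd ?ys \<noteq> 0" using hd_dropWhile by blast
  moreover have "hd ?ys \<le> 1" using zw_le1[OF w(1)] ne by auto
  ultimately show ?thesis using w ne by (intro exI[of _ ?ys]) auto
qed

lemma zeck_unique: "zw xs \<Longrightarrow> xs \<noteq> [] \<Longrightarrow> hd xs = 1 \<Longrightarrow> zw ys \<Longrightarrow> ys \<noteq> [] \<Longrightarrow> hd ys = 1 \<Longrightarrow> zval xs = zval ys \<Longrightarrow> xs = ys"
proof -
  assume a: "zw xs" "xs \<noteq> []" "hd xs = 1" "zw ys" "ys \<noteq> []" "hd ys = 1" "zval xs = zval ys"
  have "1 \<le> length ys" using a by (cases ys) auto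
  moreover have "FF (length ys) \<le> zval xs" "zval xs < FF (Suc (length ys))"
    using zval_pos_len[of ys] zval_bound[of ys] a by auto
  ultimately have "length xs = length ys" using len_det a by blast
  then show ?thesis using zw_unique a by blast
qed

lemma zeck_props: "1 \<le> m \<Longrightarrow> zw (zeck m) \<and> zeck m \<noteq> [] \<and> hd (zeck m) = 1 \<and> zval (zeck m) = m"
proof -
  assume m: "1 \<le> m"
  then obtain xs where xs: "zw xs \<and> xs \<noteq> [] \<and> hd xs = 1 \<and> zval xs = m" using zeck_exists by blast
  have "is_zeck (zeck m) m"
    unfolding zeck_def
  proof (rule theI)
    show "is_zeck xs m" using xs is_zeck_iff by blast
    show "\<And>ys. is_zeck ys m \<Longrightarrow> ys = xs" using xs is_zeck_iff zeck_unique by metis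
  qed
  then show ?thesis using is_zeck_iff by blast
qed

lemma zeck_eq: "zw xs \<Longrightarrow> xs \<noteq> [] \<Longrightarrow> hd xs = 1 \<Longrightarrow> zval xs = m \<Longrightarrow> zeck m = xs"
proof -
  assume a: "zw xs" "xs \<noteq> []" "hd xs = 1" "zval xs = m"
  have "1 \<le> m" using zval_pos_len[of xs] FF_pos[of "length xs"] a by auto
  then show ?thesis using zeck_props[of m] zeck_unique a by metis
qed

lemma zeck_len: "1 \<le> m \<Longrightarrow> 1 \<le> length (zeck m) \<and> FF (length (zeck m)) \<le> m \<and> m < FF (Suc (length (zeck m)))"
  using zeck_props[of m] zval_pos_len[of "zeck m"] zval_bound[of "zeck m"]
  by (cases "zeck m") auto

lemma zeck_len_eq: "1 \<le> N \<Longrightarrow> FF N \<le> m \<Longrightarrow> m < FF (Suc N) \<Longrightarrow> length (zeck m) = N"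
proof -
  assume a: "1 \<le> N" "FF N \<le> m" "m < FF (Suc N)"
  then have "1 \<le> m" using FF_pos[of N] by auto
  then show ?thesis using zeck_props[of m] len_det a by metis
qed


lemma zw_append: "zw (xs @ ys) \<longleftrightarrow> zw xs \<and> zw ys \<and> (xs \<noteq> [] \<longrightarrow> ys \<noteq> [] \<longrightarrow> last xs * hd ys = 0)"
proof (induction xs rule: zw.induct)
  case (2 x)
  then show ?case by (cases ys) auto
qed auto

lemma zw_replicate: "zw (replicate k 0)"
proof (induction k)
  case (Suc k) then show ?case by (cases k) auto
qed simp

definition blk :: "nat list \<Rightarrow> bool" where
  "blk c \<longleftrightarrow> zw c \<and> c \<noteq> [] \<and> hd c = 1"

definition base :: "nat list \<Rightarrow> nat \<Rightarrow> nat" where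
  "base c N = zval (c @ replicate (N - length c) 0)"

definition bnd :: "nat list \<Rightarrow> nat \<Rightarrow> nat" where
  "bnd c N = FF (N - length c + 1 - last c)"

lemma blk_last: "blk c \<Longrightarrow> last c = 0 \<or> last c = 1"
  unfolding blk_def using zw_le1[of c "last c"] by (auto simp: last_in_set)

lemma zval_app_base: "length c + length r = N \<Longrightarrow> zval (c @ r) = base c N + zval r"
proof -
  assume "length c + length r = N"
  then have "N - length c = length r" by simp
  then show ?thesis unfolding base_def using zval_app[of c r] by simp
qed

lemma word_ex:
  assumes "blk c" "length c < N" "rem < bnd c N"
  shows "\<exists>r. zw (c @ r) \<and> length r = N - length c \<and> zval (c @ r) = base c N + rem"
proof -
  have wc: "zw c" and ne: "c \<noteq> []" using assms(1) blk_def by auto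
  from blk_last[OF assms(1)] show ?thesis
  proof
    assume l: "last c = 0"
    then have "rem < FF (Suc (N - length c))" using assms(3) bnd_def by simp
    then obtain r where r: "zw r" "length r = N - length c" "zval r = rem" using zw_exists by blast
    then have "zw (c @ r)" using wc l zw_append by auto
    moreover have "zval (c @ r) = base c N + rem" using zval_app_base[of c r N] r assms(2) by simp
    ultimately show ?thesis using r by blast
  next
    assume l: "last c = 1"
    then have "rem < FF (Suc (N - length c - 1))" using assms(2,3) bnd_def
      by (simp add: Suc_diff_Suc)
    then obtain r where r: "zw r" "length r = N - length c - 1" "zval r = rem" using zw_exists by blast
    have w0: "zw (0 # r)" using r by (cases r) auto
    then have "zw (c @ (0 # r))" using wc zw_append by auto
    moreover have "length (0 # r) = N - length c" using r assms(2) by simp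
    moreover have "zval (c @ (0 # r)) = base c N + rem" using zval_app_base[of c "0 # r" N] r assms(2) by simp
    ultimately show ?thesis by blast
  qed
qed

lemma key_eq:
  assumes "blk c" "1 \<le> m" "length (zeck m) = N" "length c < N"
  shows "take (length c) (zeck m) = c \<longleftrightarrow> base c N \<le> m \<and> m < base c N + bnd c N"
proof
  assume t: "take (length c) (zeck m) = c"
  define r where "r = drop (length c) (zeck m)"
  have z: "zeck m = c @ r" using t r_def by (metis append_take_drop_id)
  have zp: "zw (zeck m)" "zval (zeck m) = m" using zeck_props assms(2) by auto
  have lr: "length r = N - length c" using r_def assms by simp
  then have rne: "r \<noteq> []" using assms(4) by auto
  have wr: "zw r" and lc: "last c * hd r = 0" using zp z zw_append rne assms(1) blk_def by auto
  have m: "m = base c N + zval r" using zval_app_base[of c r N] lr assms(4) zp z by simp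
  have "zval r < bnd c N"
  proof (cases "last c = 0")
    case True then show ?thesis using zval_bound[OF wr] lr bnd_def by simp
  next
    case False
    then have l1: "last c = 1" using blk_last[OF assms(1)] by simp
    then have "hd r = 0" using lc by simp
    then obtain r' where r': "r = 0 # r'" using rne by (cases r) auto
    then have "zval r' < FF (Suc (length r'))" using zval_bound wr zw_tl by blast
    then show ?thesis using r' lr l1 bnd_def by simp
  qed
  then show "base c N \<le> m \<and> m < base c N + bnd c N" using m by simp
next
  assume a: "base c N \<le> m \<and> m < base c N + bnd c N"
  then have "m - base c N < bnd c N" by linarith
  then obtain r where r: "zw (c @ r)" "length r = N - length c" "zval (c @ r) = base c N + (m - base c N)"
    using word_ex[OF assms(1) assms(4), of "m - base c N"] by blast
  have "zeck m = c @ r"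
    using zeck_eq[of "c @ r" m] r a assms(1) blk_def by auto
  then show "take (length c) (zeck m) = c" by simp
qed

lemma first_diff:
  assumes "length d = length c" "d \<noteq> c"
  shows "\<exists>i<length c. take i d = take i c \<and> d ! i \<noteq> c ! i"
proof -
  have ex: "\<exists>i. i < length c \<and> d ! i \<noteq> c ! i"
  proof (rule ccontr)
    assume "\<not> ?thesis"
    then have "\<forall>i<length c. d ! i = c ! i" by auto
    then have "d = c" using assms(1) by (simp add: list_eq_iff_nth_eq)
    then show False using assms(2) by simp
  qed
  define i where "i = (LEAST i. i < length c \<and> d ! i \<noteq> c ! i)"
  have i: "i < length c \<and> d ! i \<noteq> c ! i" using LeastI_ex[OF ex] i_def by simp
  have "\<And>j. j < i \<Longrightarrow> d ! j = c ! j"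
  proof -
    fix j assume "j < i"
    then have "\<not> (j < length c \<and> d ! j \<noteq> c ! j)" using not_less_Least i_def by blast
    then show "d ! j = c ! j" using \<open>j < i\<close> i by auto
  qed
  then have "take i d = take i c" using i assms(1) by (intro nth_equalityI) auto
  then show ?thesis using i by blast
qed

lemma key_le:
  assumes "blk c" "1 \<le> m" "length (zeck m) = N" "length c < N"
  shows "lex_le (take (length c) (zeck m)) c \<longleftrightarrow> m < base c N + bnd c N"
proof (cases "take (length c) (zeck m) = c")
  case True
  then show ?thesis using key_eq[OF assms] lex_le_def by auto
next
  case False
  define z where "z = zeck m"
  define d where "d = take (length c) z"
  have zp: "zw z" "zval z = m" "length z = N" using zeck_props assms(2,3) z_def by auto
  have ld: "length d = length c" using d_def zp assms(4) by simp
  have dc: "d \<noteq> c" using False d_def z_def by simp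
  obtain i where i: "i < length c" "take i d = take i c" "d ! i \<noteq> c ! i" using first_diff[OF ld dc] by blast
  have zi: "z ! i = d ! i" using d_def i by simp
  have tz: "take i z = take i c"
  proof -
    have "take i d = take i z" using i(1) d_def by (simp add: min_def)
    then show ?thesis using i(2) by simp
  qed
  show ?thesis
  proof (cases "d ! i < c ! i")
    case True
    then have le: "lex_le d c" unfolding lex_le_def using i ld by auto
    define w where "w = c @ replicate (N - length c) 0"
    have ww: "zw w" using w_def zw_append zw_replicate assms(1) blk_def by auto
    have lw: "length w = N" using w_def assms(4) by simp
    have wi: "w ! i = c ! i" using w_def i(1) by (simp add: nth_append)
    have tw: "take i w = take i c" using w_def i(1) by simp
    have "zval z < zval w"
      by (rule zw_less[of z w i]) (use zp ww lw i assms(4) tz tw zi wi True in auto)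
    then have "m < base c N" using zp w_def base_def by simp
    then show ?thesis using le d_def z_def by simp
  next
    case False
    then have gt: "c ! i < d ! i" using i by auto
    have nle: "\<not> lex_le d c"
    proof
      assume "lex_le d c"
      then obtain j where j: "j < length c" "take j d = take j c" "d ! j < c ! j"
        using dc ld unfolding lex_le_def by auto
      have "j < i \<or> j = i \<or> i < j" by auto
      then show False
      proof (elim disjE)
        assume "j < i"
        then have "take i d ! j = take i c ! j" using i(2) by simp
        then have "d ! j = c ! j" using \<open>j < i\<close> by simp
        then show False using j by simp
      next
        assume "j = i" then show False using j gt by simp
      next
        assume "i < j"
        then have "take j d ! i = take j c ! i" using j(2) by simp
        then have "d ! i = c ! i" using \<open>i < j\<close> by simp
        then show False using gt by simp
      qed
    qed
    have "bnd c N \<ge> 1" using bnd_def FF_pos by simp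
    then obtain r where r: "zw (c @ r)" "length r = N - length c" "zval (c @ r) = base c N + (bnd c N - 1)"
      using word_ex[OF assms(1) assms(4), of "bnd c N - 1"] by auto
    have lw: "length (c @ r) = N" using r assms(4) by simp
    have wi: "(c @ r) ! i = c ! i" using i(1) by (simp add: nth_append)
    have tw: "take i (c @ r) = take i c" using i(1) by simp
    have "zval (c @ r) < zval z"
      by (rule zw_less[of "c @ r" z i]) (use zp r lw i assms(4) tz tw zi wi gt in auto)
    then have "\<not> m < base c N + bnd c N" using r zp \<open>bnd c N \<ge> 1\<close> by simp
    then show ?thesis using nle d_def z_def by simp
  qed
qed


lemma sqrt5_gt2: "sqrt 5 > 2"
  by (rule real_less_rsqrt) simp

lemma sqrt5_lt3: "sqrt 5 < 3"
  by (rule real_sqrt_less_iff[of 5 9, simplified])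

lemma gphi_gt1: "gphi > 1" unfolding gphi_def using sqrt5_gt2 by simp

lemma gphi_sq: "gphi * gphi = gphi + 1"
proof -
  have "sqrt 5 * sqrt 5 = 5" by simp
  then show ?thesis unfolding gphi_def by (simp add: field_simps) 
qed

lemma gomega_eq: "gomega = gphi - 1"
  unfolding gomega_def using gphi_sq gphi_gt1 by (simp add: field_simps)

lemma gphi_gomega: "gphi * gomega = 1"
  unfolding gomega_def using gphi_gt1 by simp

lemma gomega_pos: "gomega > 0" unfolding gomega_def using gphi_gt1 by simp

lemma gomega_lt: "gomega < 2/3"
  unfolding gomega_eq gphi_def using sqrt5_lt3 sqrt5_gt2
proof -
  have "sqrt 5 < 7/3"
    by (rule real_less_lsqrt) (auto simp: power2_eq_square)
  then show "(1 + sqrt 5) / 2 - 1 < 2 / 3" by simp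
qed

lemma gomega_lt1: "gomega < 1" using gomega_lt by simp

lemma gomega_sq: "gomega * gomega = 1 - gomega"
proof -
  have "gomega * gomega = gphi * gphi - 2 * gphi + 1" by (simp add: gomega_eq algebra_simps)
  also have "\<dots> = 1 - gomega" using gphi_sq gomega_eq by simp
  finally show ?thesis .
qed

lemma FF_diff: "real (FF n) - gomega * real (FF (Suc n)) = (- gomega) ^ n * gomega ^ 2"
proof (induction n)
  case 0 then show ?case using gomega_sq by (simp add: power2_eq_square)
next
  case (Suc n)
  have "real (FF (Suc n)) - gomega * real (FF (Suc (Suc n)))
      = real (FF (Suc n)) * (1 - gomega) - gomega * real (FF n)" by (simp add: algebra_simps)
  also have "\<dots> = real (FF (Suc n)) * (gomega * gomega) - gomega * real (FF n)"
    using gomega_sq by simp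
  also have "\<dots> = - gomega * (real (FF n) - gomega * real (FF (Suc n)))"
    by (simp add: algebra_simps)
  finally show ?case using Suc by simp
qed

lemma FF_diff_abs: "\<bar>real (FF n) - gomega * real (FF (Suc n))\<bar> \<le> gomega ^ (Suc n)"
proof -
  have "\<bar>real (FF n) - gomega * real (FF (Suc n))\<bar> = gomega ^ n * gomega ^ 2"
    unfolding FF_diff using gomega_pos by (simp add: abs_mult power_abs)
  also have "\<dots> \<le> gomega ^ n * gomega"
    using gomega_pos gomega_lt1 by (intro mult_left_mono) (auto simp: power2_eq_square)
  finally show ?thesis by (simp add: mult.commute)
qed

lemma FF_diff_abs2: "\<bar>real (FF n) - gomega * real (FF (Suc n))\<bar> \<le> gomega ^ (Suc (Suc n))"
proof -
  have "\<bar>real (FF n) - gomega * real (FF (Suc n))\<bar> = gomega ^ n * gomega ^ 2"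
    unfolding FF_diff using gomega_pos by (simp add: abs_mult power_abs)
  then show ?thesis by (simp add: power2_eq_square algebra_simps)
qed

definition chat :: "nat list \<Rightarrow> real" where
  "chat c = (\<Sum>i<length c. real (c ! i) * gomega ^ i)"

lemma chat_Nil[simp]: "chat [] = 0" unfolding chat_def by simp

lemma chat_Cons[simp]: "chat (x # c) = real x + gomega * chat c"
  unfolding chat_def length_Cons sum.lessThan_Suc_shift
  by (simp add: sum_distrib_left algebra_simps)

lemma chat_rep0: "chat (replicate k 0) = 0"
  by (induction k) simp_all

lemma chat_app0: "chat (c @ replicate k 0) = chat c"
  by (induction c) (simp_all add: chat_rep0)

lemma chat_bounds: "\<forall>x\<in>set c. x \<le> 1 \<Longrightarrow> 0 \<le> chat c \<and> chat c \<le> 3"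
proof (induction c)
  case (Cons x c)
  then have "real x \<le> 1" "0 \<le> chat c" "chat c \<le> 3" by auto
  moreover have "gomega * chat c \<le> 2/3 * 3"
    using calculation gomega_lt gomega_pos by (intro mult_mono) auto
  ultimately show ?case using gomega_pos by simp
qed simp

lemma E_est:
  assumes "\<forall>x\<in>set c. x \<le> 1"
  shows "\<bar>real (zval (c @ replicate k 0)) - chat c * real (FF (length c + k))\<bar> \<le> 3 - 3 * gomega ^ length c"
  using assms
proof (induction c)
  case Nil
  have "zval (replicate k 0) = 0" by (induction k) auto
  then show ?case by simp
next
  case (Cons x c)
  define N where "N = length c + k"
  have cb: "0 \<le> chat c" "chat c \<le> 3" using chat_bounds Cons.prems by auto
  have IH: "\<bar>real (zval (c @ replicate k 0)) - chat c * real (FF N)\<bar> \<le> 3 - 3 * gomega ^ length c"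
    using Cons N_def by auto
  have d: "\<bar>real (FF N) - gomega * real (FF (Suc N))\<bar> \<le> gomega ^ (Suc (Suc N))" by (rule FF_diff_abs2)
  have "real (zval ((x # c) @ replicate k 0)) - chat (x # c) * real (FF (length (x # c) + k))
      = (real (zval (c @ replicate k 0)) - chat c * real (FF N)) + chat c * (real (FF N) - gomega * real (FF (Suc N)))"
    using N_def by (simp add: algebra_simps)
  also have "\<bar>\<dots>\<bar> \<le> (3 - 3 * gomega ^ length c) + 3 * gomega ^ (Suc (Suc N))"
  proof -
    have "\<bar>chat c * (real (FF N) - gomega * real (FF (Suc N)))\<bar> \<le> 3 * gomega ^ (Suc (Suc N))"
      unfolding abs_mult using cb d by (intro mult_mono) auto
    then show ?thesis using IH by linarith
  qed
  also have "\<dots> \<le> 3 - 3 * gomega ^ length (x # c)"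
  proof -
    have "gomega ^ (Suc (Suc N)) \<le> gomega ^ (length c + 2)"
      using gomega_pos gomega_lt1 N_def by (intro power_decreasing) auto
    also have "\<dots> = gomega ^ length c * (gomega * gomega)"
      by (simp add: power_add power2_eq_square)
    also have "\<dots> = gomega ^ length c - gomega ^ Suc (length c)"
      unfolding gomega_sq by (simp add: algebra_simps)
    finally show ?thesis by simp
  qed
  finally show ?case .
qed

lemma E_est3:
  assumes "\<forall>x\<in>set c. x \<le> 1"
  shows "\<bar>real (zval (c @ replicate k 0)) - chat c * real (FF (length c + k))\<bar> \<le> 3"
  using E_est[OF assms, of k] gomega_pos by (smt (verit) zero_le_power)


definition tt :: "nat \<Rightarrow> real" where
  "tt m = (real m - real (FF (length (zeck m)))) / real (FF (length (zeck m) - 1))"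

definition aa :: "nat list \<Rightarrow> nat \<Rightarrow> real" where
  "aa c N = (real (base c N) - real (FF N)) / real (FF (N - 1))"

definition bb :: "nat list \<Rightarrow> nat \<Rightarrow> real" where
  "bb c N = (real (base c N) + real (bnd c N) - real (FF N)) / real (FF (N - 1))"

definition alpha :: "nat list \<Rightarrow> real" where
  "alpha c = gphi * (chat c - 1)"

definition beta :: "nat list \<Rightarrow> real" where
  "beta c = gphi * (chat c + gomega ^ (length c - 1 + last c) - 1)"

lemma FF_pred_rec: "1 \<le> N \<Longrightarrow> real (FF (Suc N)) = real (FF N) + real (FF (N - 1))"
  using FF_rec by simp

lemma tt_range: "1 \<le> m \<Longrightarrow> 0 \<le> tt m \<and> tt m < 1"
proof -
  assume m: "1 \<le> m"
  define N where "N = length (zeck m)"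
  have z: "1 \<le> N" "FF N \<le> m" "m < FF (Suc N)" using zeck_len[OF m] N_def by auto
  have p: "real (FF (N - 1)) > 0" using FF_pos'[of "N - 1"] by simp
  have "real m < real (FF N) + real (FF (N - 1))" using z FF_pred_rec[of N] by linarith
  then have "real m - real (FF N) < real (FF (N - 1))" by simp
  then show ?thesis unfolding tt_def N_def[symmetric] using p z by (simp add: divide_simps)
qed

lemma real_add_less_iff: "real m < real a + real b \<longleftrightarrow> m < a + b"
  by linarith

lemma key_eq_t:
  assumes "blk c" "1 \<le> m" "length c < length (zeck m)"
  shows "take (length c) (zeck m) = c \<longleftrightarrow>
     aa c (length (zeck m)) \<le> tt m \<and> tt m < bb c (length (zeck m))"
proof -
  define N where "N = length (zeck m)"
  have p: "real (FF (N - 1)) > 0" using FF_pos'[of "N - 1"] by simp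
  have "take (length c) (zeck m) = c \<longleftrightarrow> base c N \<le> m \<and> m < base c N + bnd c N"
    using key_eq[OF assms(1,2) N_def[symmetric]] assms(3) N_def by simp
  also have "\<dots> \<longleftrightarrow> aa c N \<le> tt m \<and> tt m < bb c N"
    unfolding aa_def bb_def tt_def N_def[symmetric] using p
    by (simp add: divide_le_cancel divide_less_cancel real_add_less_iff)
  finally show ?thesis using N_def by simp
qed

lemma key_le_t:
  assumes "blk c" "1 \<le> m" "length c < length (zeck m)"
  shows "lex_le (take (length c) (zeck m)) c \<longleftrightarrow> tt m < bb c (length (zeck m))"
proof -
  define N where "N = length (zeck m)"
  have p: "real (FF (N - 1)) > 0" using FF_pos'[of "N - 1"] by simp
  have "lex_le (take (length c) (zeck m)) c \<longleftrightarrow> m < base c N + bnd c N"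
    using key_le[OF assms(1,2) N_def[symmetric]] assms(3) N_def by simp
  also have "\<dots> \<longleftrightarrow> tt m < bb c N"
    unfolding bb_def tt_def N_def[symmetric] using p
    by (simp add: divide_less_cancel real_add_less_iff)
  finally show ?thesis using N_def by simp
qed

lemma FF_at_top: "filterlim (\<lambda>N. real (FF N)) at_top sequentially"
  by (rule filterlim_at_top_mono[OF filterlim_real_sequentially]) (use FF_ge in auto)

lemma const_div_FF: "(\<lambda>N. C / real (FF N)) \<longlonglongrightarrow> 0"
  by (rule tendsto_divide_0[OF tendsto_const FF_at_top[THEN filterlim_at_top_imp_at_infinity]])

lemma ratio_lim:
  assumes "eventually (\<lambda>N. \<bar>real (g N) - L * real (FF N)\<bar> \<le> C) sequentially"
  shows "(\<lambda>N. real (g N) / real (FF N)) \<longlonglongrightarrow> L"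
proof (rule LIM_zero_cancel, rule Lim_null_comparison[OF _ const_div_FF[of C]])
  show "\<forall>\<^sub>F N in sequentially. norm (real (g N) / real (FF N) - L) \<le> C / real (FF N)"
    using assms
  proof (rule eventually_mono)
    fix N assume a: "\<bar>real (g N) - L * real (FF N)\<bar> \<le> C"
    have p: "real (FF N) > 0" using FF_pos'[of N] by simp
    have "real (g N) / real (FF N) - L = (real (g N) - L * real (FF N)) / real (FF N)"
      using p by (simp add: field_simps)
    then show "norm (real (g N) / real (FF N) - L) \<le> C / real (FF N)"
      using a p by (simp add: abs_divide divide_right_mono)
  qed
qed

lemma FF_ratio: "(\<lambda>N. real (FF N) / real (FF (N - 1))) \<longlonglongrightarrow> gphi"
proof -
  have "(\<lambda>N. real (FF (N - 1)) / real (FF N)) \<longlonglongrightarrow> gomega"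
  proof (rule ratio_lim[where C=1])
    show "\<forall>\<^sub>F N in sequentially. \<bar>real (FF (N - 1)) - gomega * real (FF N)\<bar> \<le> 1"
      using eventually_ge_at_top[of 1]
    proof (rule eventually_mono)
      fix N :: nat assume "1 \<le> N"
      then have "\<bar>real (FF (N - 1)) - gomega * real (FF N)\<bar> \<le> gomega ^ (Suc (N - 1))"
        using FF_diff_abs[of "N - 1"] by simp
      also have "\<dots> \<le> 1" using gomega_pos gomega_lt1 by (intro power_le_one) auto
      finally show "\<bar>real (FF (N - 1)) - gomega * real (FF N)\<bar> \<le> 1" .
    qed
  qed
  then have "(\<lambda>N. inverse (real (FF (N - 1)) / real (FF N))) \<longlonglongrightarrow> inverse gomega"
    using gomega_pos by (intro tendsto_inverse) auto
  moreover have "inverse gomega = gphi" unfolding gomega_def by simp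
  ultimately show ?thesis by simp
qed

lemma blk_digits: "blk c \<Longrightarrow> \<forall>x\<in>set c. x \<le> 1"
  using zw_le1 blk_def by blast

lemma base_ratio:
  assumes "blk c"
  shows "(\<lambda>N. real (base c N) / real (FF N)) \<longlonglongrightarrow> chat c"
proof (rule ratio_lim[where C=3])
  show "\<forall>\<^sub>F N in sequentially. \<bar>real (base c N) - chat c * real (FF N)\<bar> \<le> 3"
    using eventually_ge_at_top[of "length c"]
  proof (rule eventually_mono)
    fix N assume "length c \<le> N"
    then show "\<bar>real (base c N) - chat c * real (FF N)\<bar> \<le> 3"
      using E_est3[OF blk_digits[OF assms], of "N - length c"] unfolding base_def by simp
  qed
qed

lemma zval_zeros: "zval (replicate j 0 @ xs) = zval xs"
  by (induction j) auto

lemma chat_zeros1: "chat (replicate j 0 @ [1]) = gomega ^ j"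
  by (induction j) auto

lemma bnd_ratio:
  assumes "blk c"
  shows "(\<lambda>N. real (bnd c N) / real (FF N)) \<longlonglongrightarrow> gomega ^ (length c - 1 + last c)"
proof (rule ratio_lim[where C=3])
  define j where "j = length c - 1 + last c"
  have l1: "last c \<le> 1" using blk_last[OF assms] by auto
  have "c \<noteq> []" using assms unfolding blk_def by simp
  then have l2: "1 \<le> length c" by (cases c) auto
  note l = l1 l2
  show "\<forall>\<^sub>F N in sequentially. \<bar>real (bnd c N) - gomega ^ (length c - 1 + last c) * real (FF N)\<bar> \<le> 3"
    using eventually_ge_at_top[of "length c + 1"]
  proof (rule eventually_mono)
    fix N assume N: "length c + 1 \<le> N"
    define w where "w = replicate j 0 @ [1::nat]"
    have E: "\<bar>real (zval (w @ replicate (N - j - 1) 0)) - chat w * real (FF (length w + (N - j - 1)))\<bar> \<le> 3"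
      by (rule E_est3) (simp add: w_def)
    have "zval (w @ replicate (N - j - 1) 0) = FF (Suc (N - j - 1))"
      unfolding w_def using zval_zeros[of j "1 # replicate (N - j - 1) 0"] zval_zeros[of "N - j - 1" "[]"]
      by simp
    moreover have "Suc (N - j - 1) = N - length c + 1 - last c" using N l j_def by simp
    moreover have "length w + (N - j - 1) = N" using N l j_def w_def by simp
    moreover have "chat w = gomega ^ j" using w_def chat_zeros1 by simp
    ultimately show "\<bar>real (bnd c N) - gomega ^ (length c - 1 + last c) * real (FF N)\<bar> \<le> 3"
      using E unfolding bnd_def j_def by simp
  qed
qed

lemma ab_form: "(real b - real (FF N)) / real (FF (N - 1)) = (real b / real (FF N) - 1) * (real (FF N) / real (FF (N - 1)))"
  using FF_pos'[of N] FF_pos'[of "N - 1"] by (simp add: field_simps)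

lemma aa_lim: "blk c \<Longrightarrow> aa c \<longlonglongrightarrow> alpha c"
proof -
  assume b: "blk c"
  have "(\<lambda>N. (real (base c N) / real (FF N) - 1) * (real (FF N) / real (FF (N - 1)))) \<longlonglongrightarrow> (chat c - 1) * gphi"
    by (intro tendsto_intros base_ratio[OF b] FF_ratio)
  then show ?thesis unfolding aa_def alpha_def ab_form by (simp add: mult.commute)
qed

lemma bb_lim: "blk c \<Longrightarrow> bb c \<longlonglongrightarrow> beta c"
proof -
  assume b: "blk c"
  have "(\<lambda>N. (real (base c N) / real (FF N) + real (bnd c N) / real (FF N) - 1) * (real (FF N) / real (FF (N - 1))))
     \<longlonglongrightarrow> (chat c + gomega ^ (length c - 1 + last c) - 1) * gphi"
    by (intro tendsto_intros base_ratio[OF b] bnd_ratio[OF b] FF_ratio)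
  moreover have "bb c = (\<lambda>N. (real (base c N) / real (FF N) + real (bnd c N) / real (FF N) - 1) * (real (FF N) / real (FF (N - 1))))"
  proof (rule ext)
    fix N
    show "bb c N = (real (base c N) / real (FF N) + real (bnd c N) / real (FF N) - 1) * (real (FF N) / real (FF (N - 1)))"
      unfolding bb_def using FF_pos'[of N] FF_pos'[of "N - 1"] by (simp add: field_simps)
  qed
  ultimately show ?thesis unfolding beta_def by (simp only: mult.commute[of _ gphi])
qed


lemma tt_alpha:
  assumes m: "1 \<le> m"
  shows "\<bar>tt m - alpha (zeck m)\<bar> \<le> 5 / real (FF (length (zeck m) - 1))"
proof -
  define c where "c = zeck m"
  define N where "N = length c"
  have zp: "zw c" "c \<noteq> []" "hd c = 1" "zval c = m" using zeck_props[OF m] c_def by auto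
  have N1: "1 \<le> N" using zp N_def by (cases c) auto
  have dig: "\<forall>x\<in>set c. x \<le> 1" using zw_le1 zp by blast
  have cb: "0 \<le> chat c" "chat c \<le> 3" using chat_bounds[OF dig] by auto
  have E: "\<bar>real m - chat c * real (FF N)\<bar> \<le> 3"
    using E_est3[OF dig, of 0] zp N_def by simp
  have d1: "\<bar>real (FF (N - 1)) - gomega * real (FF N)\<bar> \<le> gomega ^ N"
    using FF_diff_abs[of "N - 1"] N1 by simp
  have "gomega ^ N \<le> gomega ^ 1"
    using gomega_pos gomega_lt1 N1 by (intro power_decreasing) auto
  then have d1': "\<bar>real (FF (N - 1)) - gomega * real (FF N)\<bar> \<le> gomega" using d1 by simp
  have "real (FF N) - gphi * real (FF (N - 1)) = - gphi * (real (FF (N - 1)) - gomega * real (FF N))"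
    using gphi_gomega by (simp add: algebra_simps)
  then have "\<bar>real (FF N) - gphi * real (FF (N - 1))\<bar> = gphi * \<bar>real (FF (N - 1)) - gomega * real (FF N)\<bar>"
    using gphi_gt1 by (simp add: abs_mult)
  also have "\<dots> \<le> gphi * gomega" using d1' gphi_gt1 by (intro mult_left_mono) auto
  finally have d2: "\<bar>real (FF N) - gphi * real (FF (N - 1))\<bar> \<le> 1" using gphi_gomega by simp
  have p: "real (FF (N - 1)) > 0" using FF_pos'[of "N - 1"] by simp
  have "tt m - alpha c = ((real m - chat c * real (FF N)) + (chat c - 1) * (real (FF N) - gphi * real (FF (N - 1)))) / real (FF (N - 1))"
    unfolding tt_def alpha_def c_def[symmetric] N_def[symmetric] using p by (simp add: field_simps)
  moreover have "\<bar>(real m - chat c * real (FF N)) + (chat c - 1) * (real (FF N) - gphi * real (FF (N - 1)))\<bar> \<le> 5"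
  proof -
    have "\<bar>(chat c - 1) * (real (FF N) - gphi * real (FF (N - 1)))\<bar> \<le> 2 * 1"
      unfolding abs_mult using cb d2 by (intro mult_mono) auto
    then show ?thesis using E by linarith
  qed
  ultimately have "\<bar>tt m - alpha c\<bar> \<le> 5 / real (FF (N - 1))"
    using p by (simp add: abs_divide divide_right_mono)
  then show ?thesis using c_def N_def by simp
qed

lemma dens_arith:
  fixes r a z x y d e5 e1 :: real
  assumes "e5 < d/4" "e1 < d/20" "z \<le> r" "r < z + e1" "r - a \<le> e5" "- (r - a) \<le> e5" "z = (x+y)/2" "d = y - x" "x < y"
  shows "x < a \<and> a < y"
  using assms by (intro conjI) argo+

lemma density:
  assumes "0 \<le> x" "x < y" "y \<le> 1"
  shows "\<exists>c. blk c \<and> x < alpha c \<and> alpha c < y"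
proof -
  define d where "d = y - x"
  have d: "d > 0" using assms d_def by simp
  define N where "N = nat \<lceil>20 / d\<rceil> + 2"
  define F where "F = real (FF (N - 1))"
  have "real (N - 1) \<le> F" using FF_ge[of "N - 1"] F_def by simp
  moreover have "real (N - 1) > 20 / d" using N_def by linarith
  ultimately have F: "F > 20 / d" by simp
  then have Fd: "F * d > 20" using d by (simp add: field_simps)
  have Fp: "F > 0" using F_def FF_pos'[of "N - 1"] by simp
  define z where "z = (x + y) / 2"
  have z0: "0 \<le> z * F" using assms Fp z_def by simp
  define j where "j = nat \<lceil>z * F\<rceil>"
  have j1: "z * F \<le> real j" "real j < z * F + 1" using z0 j_def by linarith+
  have "z * F + 1 < F"
  proof -
    have "z \<le> 1 - d / 2" unfolding z_def d_def using assms by (simp add: field_simps)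
    then have "z * F \<le> (1 - d/2) * F" using Fp by (intro mult_right_mono) auto
    then show ?thesis using Fd by (simp add: algebra_simps)
  qed
  then have jF: "j < FF (N - 1)" using j1 F_def by linarith
  define m where "m = FF N + j"
  have N1: "1 \<le> N" using N_def by simp
  have mr: "FF N \<le> m" "m < FF (Suc N)" using m_def jF FF_rec[OF N1] by auto
  have lz: "length (zeck m) = N" using zeck_len_eq[OF N1 mr] .
  have m1: "1 \<le> m" using mr FF_pos[of N] by linarith
  have ttm: "tt m = real j / F" unfolding tt_def lz F_def by (simp add: m_def)
  have ta: "\<bar>tt m - alpha (zeck m)\<bar> \<le> 5 / F" using tt_alpha[OF m1] lz F_def by simp
  have h1: "5 / F < d / 4" using Fd Fp d by (simp add: field_simps)
  have h2: "1 / F < d / 20" using Fd Fp d by (simp add: field_simps)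
  have h3: "z \<le> real j / F" "real j / F < z + 1 / F" using j1 Fp by (simp_all add: field_simps)
  have h4: "\<bar>real j / F - alpha (zeck m)\<bar> \<le> 5 / F" using ta ttm by simp
  have "x < alpha (zeck m) \<and> alpha (zeck m) < y"
    by (rule dens_arith[OF h1 h2 h3 _ _ z_def d_def assms(2)]) (use h4 in \<open>simp_all add: abs_le_iff\<close>)
  moreover have "blk (zeck m)" using zeck_props[OF m1] blk_def by simp
  ultimately show ?thesis by blast
qed

definition ext :: "nat list \<Rightarrow> nat \<Rightarrow> nat" where
  "ext c = (\<lambda>k. if 1 \<le> k \<and> k \<le> length c then c ! (k - 1) else 0)"

lemma ext_Fstar:
  assumes b: "blk c"
  shows "ext c \<in> Fstar"
proof -
  have w: "zw c" using b blk_def by simp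
  have dig: "\<forall>x\<in>set c. x \<le> 1" using blk_digits[OF b] .
  have A: "\<forall>k\<ge>1. ext c k \<in> {0, 1}"
  proof (intro allI impI)
    fix k :: nat assume "1 \<le> k"
    show "ext c k \<in> {0, 1}"
    proof (cases "k \<le> length c")
      case True
      then have "c ! (k - 1) \<in> set c" using \<open>1 \<le> k\<close> by simp
      then have "c ! (k - 1) \<le> 1" using dig by blast
      then show ?thesis unfolding ext_def using True \<open>1 \<le> k\<close> by auto
    qed (simp add: ext_def)
  qed
  have B: "\<forall>k\<ge>1. ext c k * ext c (Suc k) = 0"
  proof (intro allI impI)
    fix k :: nat assume k: "1 \<le> k"
    show "ext c k * ext c (Suc k) = 0"
    proof (cases "Suc k \<le> length c")
      case True
      have "Suc (k - 1) < length c" using True k by simp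
      then have "c ! (k - 1) * c ! Suc (k - 1) = 0"
        using w unfolding zw_iff by blast
      then show ?thesis unfolding ext_def using True k by simp
    qed (simp add: ext_def)
  qed
  have C: "\<not> (\<exists>j\<ge>1. \<forall>i. ext c (j + i) = (if even i then 1 else 0))"
  proof
    assume "\<exists>j\<ge>1. \<forall>i. ext c (j + i) = (if even i then 1 else 0)"
    then obtain j where "\<forall>i. ext c (j + i) = (if even i then 1 else 0)" "1 \<le> j" by blast
    then have "ext c (j + 2 * length c) = 1" by auto
    moreover have "ext c (j + 2 * length c) = 0"
      using \<open>1 \<le> j\<close> b unfolding ext_def blk_def by auto
    ultimately show False by simp
  qed
  show ?thesis unfolding Fstar_def using A B C by blast
qed

lemma ext_1: "blk c \<Longrightarrow> ext c 1 = 1"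
  unfolding ext_def blk_def by (cases c) auto

lemma restr_nth: "i < s \<Longrightarrow> restr \<mu> s ! i = \<mu> (Suc i)"
  unfolding restr_def by (subst nth_map_upt) auto

lemma restr_len[simp]: "length (restr \<mu> s) = s"
  unfolding restr_def by simp

lemma restr_ext: "length c \<le> s \<Longrightarrow> restr (ext c) s = c @ replicate (s - length c) 0"
  by (rule nth_equalityI) (auto simp: nth_append restr_nth ext_def)

lemma dotF_ext: "dotF (ext c) = chat c"
proof -
  have "(\<Sum>k. real (ext c (Suc k)) * gomega ^ k) = (\<Sum>k<length c. real (ext c (Suc k)) * gomega ^ k)"
    by (rule suminf_finite) (auto simp: ext_def)
  also have "\<dots> = chat c" unfolding chat_def ext_def by (intro sum.cong) auto
  finally show ?thesis unfolding dotF_def .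
qed

lemma restr_blk:
  assumes "\<mu> \<in> Fstar" "\<mu> 1 = 1" "1 \<le> s"
  shows "blk (restr \<mu> s)" "length (restr \<mu> s) = s"
    "chat (restr \<mu> s) = (\<Sum>i<s. real (\<mu> (Suc i)) * gomega ^ i)"
    "last (restr \<mu> s) \<le> 1"
proof -
  have F1: "\<forall>k\<ge>1. \<mu> k \<in> {0, 1}" and F2: "\<forall>k\<ge>1. \<mu> k * \<mu> (Suc k) = 0"
    using assms(1) unfolding Fstar_def by auto
  show L: "length (restr \<mu> s) = s" unfolding restr_def by simp
  have nth: "\<And>i. i < s \<Longrightarrow> restr \<mu> s ! i = \<mu> (Suc i)" by (rule restr_nth)
  have "set (restr \<mu> s) \<subseteq> {0, 1}" unfolding restr_def using F1 by auto
  moreover have "\<forall>i. Suc i < length (restr \<mu> s) \<longrightarrow> restr \<mu> s ! i * restr \<mu> s ! Suc i = 0"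
    using F2 nth L by auto
  ultimately have "zw (restr \<mu> s)" unfolding zw_iff by blast
  moreover have "restr \<mu> s \<noteq> []" using L assms(3) by (metis list.size(3) not_one_le_zero)
  moreover have "hd (restr \<mu> s) = 1" using nth[of 0] assms(2,3) L
    by (metis hd_conv_nth calculation(2) One_nat_def less_le_trans zero_less_one)
  ultimately show "blk (restr \<mu> s)" unfolding blk_def by blast
  then show "last (restr \<mu> s) \<le> 1" using blk_last by fastforce
  show "chat (restr \<mu> s) = (\<Sum>i<s. real (\<mu> (Suc i)) * gomega ^ i)"
    unfolding chat_def L using nth by (intro sum.cong) auto
qed

lemma beta_restr_lim:
  assumes "\<mu> \<in> Fstar" "\<mu> 1 = 1"
  shows "(\<lambda>s. beta (restr \<mu> s)) \<longlonglongrightarrow> gphi * (dotF \<mu> - 1)"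
proof -
  have F1: "\<forall>k\<ge>1. \<mu> k \<in> {0, 1}" using assms(1) unfolding Fstar_def by auto
  have sm: "summable (\<lambda>k. real (\<mu> (Suc k)) * gomega ^ k)"
  proof (rule summable_comparison_test[OF _ summable_geometric[of gomega]])
    have "norm (real (\<mu> (Suc n)) * gomega ^ n) \<le> gomega ^ n" for n
    proof -
      have "\<mu> (Suc n) \<in> {0, 1}" using F1 by auto
      then show ?thesis using gomega_pos by (auto simp: abs_mult)
    qed
    then show "\<exists>N. \<forall>n\<ge>N. norm (real (\<mu> (Suc n)) * gomega ^ n) \<le> gomega ^ n" by blast
    show "norm gomega < 1" using gomega_pos gomega_lt1 by simp
  qed
  have c: "(\<lambda>s. \<Sum>i<s. real (\<mu> (Suc i)) * gomega ^ i) \<longlonglongrightarrow> dotF \<mu>"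
    unfolding dotF_def using summable_LIMSEQ[OF sm] .
  have z: "(\<lambda>s. gomega ^ (length (restr \<mu> s) - 1 + last (restr \<mu> s))) \<longlonglongrightarrow> 0"
  proof (rule Lim_null_comparison[where g="\<lambda>s. gphi * gomega ^ s"])
    show "(\<lambda>s. gphi * gomega ^ s) \<longlonglongrightarrow> 0"
      using gomega_pos gomega_lt1 by (intro tendsto_mult_right_zero LIMSEQ_power_zero) auto
    show "\<forall>\<^sub>F s in sequentially. norm (gomega ^ (length (restr \<mu> s) - 1 + last (restr \<mu> s))) \<le> gphi * gomega ^ s"
      using eventually_ge_at_top[of 1]
    proof (rule eventually_mono)
      fix s :: nat assume s: "1 \<le> s"
      have L: "length (restr \<mu> s) = s" using restr_blk[OF assms s] by simp
      have "gomega ^ (s - 1 + last (restr \<mu> s)) \<le> gomega ^ (s - 1)"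
        using gomega_pos gomega_lt1 by (intro power_decreasing) auto
      also have "\<dots> = gphi * gomega ^ s"
        using s gphi_gomega by (cases s) (auto simp: algebra_simps)
      finally show "norm (gomega ^ (length (restr \<mu> s) - 1 + last (restr \<mu> s))) \<le> gphi * gomega ^ s"
        using L gomega_pos by simp
    qed
  qed
  have "(\<lambda>s. gphi * ((\<Sum>i<s. real (\<mu> (Suc i)) * gomega ^ i) + gomega ^ (length (restr \<mu> s) - 1 + last (restr \<mu> s)) - 1))
      \<longlonglongrightarrow> gphi * (dotF \<mu> + 0 - 1)"
    by (intro tendsto_intros c z)
  moreover have "eventually (\<lambda>s. gphi * ((\<Sum>i<s. real (\<mu> (Suc i)) * gomega ^ i) + gomega ^ (length (restr \<mu> s) - 1 + last (restr \<mu> s)) - 1)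
      = beta (restr \<mu> s)) sequentially"
    using eventually_ge_at_top[of 1]
    by (rule eventually_mono) (simp add: beta_def restr_blk[OF assms])
  ultimately show ?thesis by (simp add: tendsto_cong)
qed


definition prp :: "(nat \<Rightarrow> bool) \<Rightarrow> nat \<Rightarrow> real" where
  "prp P n = real (card {k \<in> {1..n}. P k}) / real n"

definition clmp :: "real \<Rightarrow> real" where
  "clmp x = max 0 (min 1 x)"

lemma prp_bounds: "0 \<le> prp P n \<and> prp P n \<le> 1"
proof -
  have "card {k \<in> {1..n}. P k} \<le> card {1..n}" by (intro card_mono) auto
  then have "card {k \<in> {1..n}. P k} \<le> n" by simp
  then show ?thesis unfolding prp_def by (cases "n = 0") (auto simp: divide_simps)
qed

lemma cnt:
  assumes "eventually (\<lambda>k. Q k \<longrightarrow> P k) sequentially"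
  shows "\<exists>k0::nat. \<forall>n. prp Q n \<le> prp P n + real k0 / real n"
proof -
  obtain k0 where k0: "\<And>k. k \<ge> k0 \<Longrightarrow> Q k \<longrightarrow> P k" using assms unfolding eventually_sequentially by auto
  have c: "card {k \<in> {1..n}. Q k} \<le> card {k \<in> {1..n}. P k} + k0" for n
  proof -
    have "{k \<in> {1..n}. Q k} \<subseteq> {k \<in> {1..n}. P k} \<union> {..<k0}"
    proof
      fix k assume "k \<in> {k \<in> {1..n}. Q k}"
      then show "k \<in> {k \<in> {1..n}. P k} \<union> {..<k0}" using k0[of k] by (cases "k < k0") auto
    qed
    then have "card {k \<in> {1..n}. Q k} \<le> card ({k \<in> {1..n}. P k} \<union> {..<k0})" by (intro card_mono) auto
    also have "\<dots> \<le> card {k \<in> {1..n}. P k} + card {..<k0}" by (rule card_Un_le)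
    finally show ?thesis by simp
  qed
  have "prp Q n \<le> prp P n + real k0 / real n" for n
  proof -
    have "real (card {k \<in> {1..n}. Q k}) \<le> real (card {k \<in> {1..n}. P k}) + real k0" using c[of n] by linarith
    then have "real (card {k \<in> {1..n}. Q k}) / real n \<le> (real (card {k \<in> {1..n}. P k}) + real k0) / real n"
      by (intro divide_right_mono) auto
    then show ?thesis unfolding prp_def by (simp add: add_divide_distrib)
  qed
  then show ?thesis by blast
qed

lemma sand2:
  assumes "\<And>e. e > 0 \<Longrightarrow> \<exists>Q1 Q2 L1 L2. (prp Q1 \<longlonglongrightarrow> L1) \<and> L - e \<le> L1 \<and> (prp Q2 \<longlonglongrightarrow> L2) \<and> L2 \<le> L + e \<and>
      eventually (\<lambda>k. Q1 k \<longrightarrow> P k) sequentially \<and> eventually (\<lambda>k. P k \<longrightarrow> Q2 k) sequentially"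
  shows "prp P \<longlonglongrightarrow> L"
  unfolding tendsto_iff
proof (intro allI impI)
  fix r :: real assume r: "r > 0"
  define e where "e = r / 3"
  have e: "e > 0" using r e_def by simp
  obtain Q1 Q2 L1 L2 where Q: "prp Q1 \<longlonglongrightarrow> L1" "L - e \<le> L1" "prp Q2 \<longlonglongrightarrow> L2" "L2 \<le> L + e"
    "eventually (\<lambda>k. Q1 k \<longrightarrow> P k) sequentially" "eventually (\<lambda>k. P k \<longrightarrow> Q2 k) sequentially"
    using assms[OF e] by blast
  obtain k1 where k1: "\<And>n. prp Q1 n \<le> prp P n + real k1 / real n" using cnt[OF Q(5)] by blast
  obtain k2 where k2: "\<And>n. prp P n \<le> prp Q2 n + real k2 / real n" using cnt[OF Q(6)] by blast
  have ev1: "eventually (\<lambda>n. dist (prp Q1 n) L1 < e) sequentially" using Q(1)[unfolded tendsto_iff] e by auto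
  have ev2: "eventually (\<lambda>n. dist (prp Q2 n) L2 < e) sequentially" using Q(3)[unfolded tendsto_iff] e by auto
  have ev3: "eventually (\<lambda>n. dist (real k1 / real n) 0 < e) sequentially"
    using lim_const_over_n[of "real k1", unfolded tendsto_iff] e by auto
  have ev4: "eventually (\<lambda>n. dist (real k2 / real n) 0 < e) sequentially"
    using lim_const_over_n[of "real k2", unfolded tendsto_iff] e by auto
  show "eventually (\<lambda>n. dist (prp P n) L < r) sequentially"
    using ev1 ev2 ev3 ev4
  proof (eventually_elim)
    case (elim n)
    have a: "prp Q1 n > L1 - e" "prp Q2 n < L2 + e" "real k1 / real n < e" "real k2 / real n < e"
      using elim by (auto simp: dist_real_def abs_less_iff)
    have "prp P n > L - r" using a k1[of n] Q(2) e_def by linarith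
    moreover have "prp P n < L + r" using a k2[of n] Q(4) e_def by linarith
    ultimately show ?case by (simp add: dist_real_def abs_less_iff)
  qed
qed

lemma eqx:
  assumes p: "\<And>k. 0 \<le> p k \<and> p k < 1"
    and eq: "\<And>x. x \<in> {0..1} \<Longrightarrow> prp (\<lambda>k. p k \<le> x) \<longlonglongrightarrow> x"
  shows "prp (\<lambda>k. p k \<le> x) \<longlonglongrightarrow> clmp x"
proof (cases "x < 0")
  case True
  have "\<not> p k \<le> x" for k using p[of k] True by linarith
  then have "{k \<in> {1..n}. p k \<le> x} = {}" for n by auto
  then have "prp (\<lambda>k. p k \<le> x) = (\<lambda>n. 0)" unfolding prp_def by auto
  moreover have "clmp x = 0" using True clmp_def by simp
  ultimately show ?thesis by simp
next
  case False
  show ?thesis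
  proof (cases "x > 1")
    case True
    have "eventually (\<lambda>n. prp (\<lambda>k. p k \<le> x) n = 1) sequentially"
      using eventually_ge_at_top[of 1]
    proof (rule eventually_mono)
      fix n :: nat assume "1 \<le> n"
      have "p k \<le> x" for k using p[of k] True by linarith
      then have "{k \<in> {1..n}. p k \<le> x} = {1..n}" by auto
      then show "prp (\<lambda>k. p k \<le> x) n = 1" unfolding prp_def using \<open>1 \<le> n\<close> by simp
    qed
    then have "prp (\<lambda>k. p k \<le> x) \<longlonglongrightarrow> 1" by (rule tendsto_eventually)
    moreover have "clmp x = 1" using True clmp_def by simp
    ultimately show ?thesis by simp
  next
    case False
    then have "x \<in> {0..1}" "clmp x = x" using \<open>\<not> x < 0\<close> clmp_def by auto
    then show ?thesis using eq by simp
  qed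
qed

lemma clmp_mono: "x \<le> y \<Longrightarrow> clmp x \<le> clmp y"
  unfolding clmp_def by simp

lemma intv:
  assumes p: "\<And>k. 0 \<le> p k \<and> p k < 1"
    and eq: "\<And>x. x \<in> {0..1} \<Longrightarrow> prp (\<lambda>k. p k \<le> x) \<longlonglongrightarrow> x"
    and x: "x1 \<le> x2"
  shows "prp (\<lambda>k. x1 < p k \<and> p k \<le> x2) \<longlonglongrightarrow> clmp x2 - clmp x1"
proof -
  have eqn: "prp (\<lambda>k. x1 < p k \<and> p k \<le> x2) n = prp (\<lambda>k. p k \<le> x2) n - prp (\<lambda>k. p k \<le> x1) n" for n
  proof -
    have "{k \<in> {1..n}. p k \<le> x2} = {k \<in> {1..n}. p k \<le> x1} \<union> {k \<in> {1..n}. x1 < p k \<and> p k \<le> x2}"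
      using x by auto
    moreover have "{k \<in> {1..n}. p k \<le> x1} \<inter> {k \<in> {1..n}. x1 < p k \<and> p k \<le> x2} = {}" by auto
    ultimately have "card {k \<in> {1..n}. p k \<le> x2} = card {k \<in> {1..n}. p k \<le> x1} + card {k \<in> {1..n}. x1 < p k \<and> p k \<le> x2}"
      by (simp add: card_Un_disjoint)
    then show ?thesis unfolding prp_def by (simp add: add_divide_distrib)
  qed
  have "prp (\<lambda>k. x1 < p k \<and> p k \<le> x2) = (\<lambda>n. prp (\<lambda>k. p k \<le> x2) n - prp (\<lambda>k. p k \<le> x1) n)"
    using eqn by (rule ext)
  moreover have "(\<lambda>n. prp (\<lambda>k. p k \<le> x2) n - prp (\<lambda>k. p k \<le> x1) n) \<longlonglongrightarrow> clmp x2 - clmp x1"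
    by (intro tendsto_diff eqx[OF p eq])
  ultimately show ?thesis by simp
qed

lemma sand:
  assumes p: "\<And>k. 0 \<le> p k \<and> p k < 1"
    and eq: "\<And>x. x \<in> {0..1} \<Longrightarrow> prp (\<lambda>k. p k \<le> x) \<longlonglongrightarrow> x"
    and H: "\<And>e. e > 0 \<Longrightarrow> \<exists>x1 x2 y1 y2. L - e \<le> clmp x2 - clmp x1 \<and> y1 \<le> y2 \<and> clmp y2 - clmp y1 \<le> L + e \<and>
      eventually (\<lambda>k. x1 < p k \<and> p k \<le> x2 \<longrightarrow> P k) sequentially \<and>
      eventually (\<lambda>k. P k \<longrightarrow> y1 < p k \<and> p k \<le> y2) sequentially"
  shows "prp P \<longlonglongrightarrow> L"
proof (rule sand2)
  fix e :: real assume e: "e > 0"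
  obtain x1 x2 y1 y2 where X: "L - e \<le> clmp x2 - clmp x1" "y1 \<le> y2" "clmp y2 - clmp y1 \<le> L + e"
      "eventually (\<lambda>k. x1 < p k \<and> p k \<le> x2 \<longrightarrow> P k) sequentially"
      "eventually (\<lambda>k. P k \<longrightarrow> y1 < p k \<and> p k \<le> y2) sequentially"
    using H[OF e] by blast
  have up: "prp (\<lambda>k. y1 < p k \<and> p k \<le> y2) \<longlonglongrightarrow> clmp y2 - clmp y1" by (rule intv[OF p eq X(2)])
  show "\<exists>Q1 Q2 L1 L2. (prp Q1 \<longlonglongrightarrow> L1) \<and> L - e \<le> L1 \<and> (prp Q2 \<longlonglongrightarrow> L2) \<and> L2 \<le> L + e \<and>
      eventually (\<lambda>k. Q1 k \<longrightarrow> P k) sequentially \<and> eventually (\<lambda>k. P k \<longrightarrow> Q2 k) sequentially"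
  proof (cases "x1 \<le> x2")
    case True
    have lo: "prp (\<lambda>k. x1 < p k \<and> p k \<le> x2) \<longlonglongrightarrow> clmp x2 - clmp x1" by (rule intv[OF p eq True])
    show ?thesis using lo up X by blast
  next
    case False
    then have "clmp x2 \<le> clmp x1" using clmp_mono by simp
    then have "L - e \<le> 0" using X(1) by simp
    moreover have "prp (\<lambda>k. False) = (\<lambda>n. 0)" by (rule ext) (simp add: prp_def)
    then have "prp (\<lambda>k. False) \<longlonglongrightarrow> 0" by simp
    ultimately show ?thesis using up X by (intro exI[of _ "\<lambda>k. False"] exI[of _ "\<lambda>k. y1 < p k \<and> p k \<le> y2"]) auto
  qed
qed


definition hgood :: "(real \<Rightarrow> real) \<Rightarrow> bool" where
  "hgood h \<longleftrightarrow> continuous_on {0..1} h \<and> strict_mono_on {0..1} h \<and> h 0 = 0 \<and> h 1 = 1"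

definition Hinv :: "(real \<Rightarrow> real) \<Rightarrow> real \<Rightarrow> real" where
  "Hinv h y = the_inv_into {0..1} h (clmp y)"

lemma cont_eps:
  fixes f :: "real \<Rightarrow> real"
  assumes "isCont f x" "e > 0"
  shows "\<exists>d>0. \<forall>y. \<bar>y - x\<bar> < d \<longrightarrow> \<bar>f y - f x\<bar> < e"
  using assms unfolding continuous_at_eps_delta dist_real_def by blast

lemma clmp_range: "clmp y \<in> {0..1}" unfolding clmp_def by auto

lemma clmp_id: "y \<in> {0..1} \<Longrightarrow> clmp y = y" unfolding clmp_def by auto

context
  fixes h :: "real \<Rightarrow> real"
  assumes hg: "hgood h"
begin

lemma h_cont: "continuous_on {0..1} h" and h_sm: "strict_mono_on {0..1} h" and h0: "h 0 = 0" and h1: "h 1 = 1"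
  using hg hgood_def by auto

lemma h_inj: "inj_on h {0..1}" using strict_mono_on_imp_inj_on[OF h_sm] .

lemma h_range: "p \<in> {0..1} \<Longrightarrow> h p \<in> {0..1}"
  using strict_mono_on_leD[OF h_sm, of 0 p] strict_mono_on_leD[OF h_sm, of p 1] h0 h1 by auto

lemma h_img: "h ` {0..1} = {0..1}"
proof
  show "h ` {0..1} \<subseteq> {0..1}" using h_range by auto
  show "{0..1} \<subseteq> h ` {0..1}"
  proof
    fix y :: real assume "y \<in> {0..1}"
    then obtain x where "0 \<le> x" "x \<le> 1" "h x = y" using IVT'[of h 0 y 1] h0 h1 h_cont by auto
    then show "y \<in> h ` {0..1}" by force
  qed
qed

lemma H_range: "Hinv h y \<in> {0..1}"
  unfolding Hinv_def using the_inv_into_into[OF h_inj, of "clmp y" "{0..1}"] clmp_range h_img by auto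

lemma h_H: "h (Hinv h y) = clmp y"
  unfolding Hinv_def using f_the_inv_into_f[OF h_inj, of "clmp y"] clmp_range h_img by auto

lemma H_h: "p \<in> {0..1} \<Longrightarrow> Hinv h (h p) = p"
  unfolding Hinv_def using clmp_id[OF h_range] the_inv_into_f_f[OF h_inj] by simp

lemma H0: "Hinv h 0 = 0" using H_h[of 0] h0 by simp
lemma H1: "Hinv h 1 = 1" using H_h[of 1] h1 by simp

lemma h_le_iff: "p \<in> {0..1} \<Longrightarrow> q \<in> {0..1} \<Longrightarrow> h p \<le> h q \<longleftrightarrow> p \<le> q"
  using strict_mono_on_leD[OF h_sm] strict_mono_onD[OF h_sm] by (meson linorder_not_le)

lemma H_le_iff: "p \<in> {0..1} \<Longrightarrow> 0 \<le> y \<Longrightarrow> h p \<le> y \<longleftrightarrow> p \<le> Hinv h y"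
proof -
  assume p: "p \<in> {0..1}" and y: "0 \<le> y"
  show ?thesis
  proof (cases "y \<le> 1")
    case True
    then have "clmp y = y" using y clmp_id by auto
    then have "h (Hinv h y) = y" using h_H by simp
    then show ?thesis using h_le_iff[OF p H_range, of y] by simp
  next
    case False
    then have "clmp y = 1" unfolding clmp_def by simp
    then have "Hinv h y = 1" unfolding Hinv_def using H1 Hinv_def clmp_id by auto
    then show ?thesis using h_range[OF p] p False by auto
  qed
qed

lemma H_ii: "p \<in> {0..1} \<Longrightarrow> h p \<le> y \<Longrightarrow> p \<le> Hinv h y"
  using H_le_iff h_range by (metis atLeastAtMost_iff order_trans)

lemma H_nonpos: "y \<le> 0 \<Longrightarrow> Hinv h y = 0"
proof -
  assume "y \<le> 0"
  then have "clmp y = 0" unfolding clmp_def by simp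
  then show ?thesis using H0 unfolding Hinv_def clmp_def by simp
qed

lemma H_i: "p \<in> {0..1} \<Longrightarrow> p \<le> Hinv h y \<Longrightarrow> 0 < Hinv h y \<Longrightarrow> h p \<le> y"
proof -
  assume a: "p \<in> {0..1}" "p \<le> Hinv h y" "0 < Hinv h y"
  have "0 < y"
  proof (rule ccontr)
    assume "\<not> 0 < y" then have "Hinv h y = 0" using H_nonpos by simp
    then show False using a by simp
  qed
  then show ?thesis using H_le_iff a by auto
qed

lemma H_mono: "y \<le> y' \<Longrightarrow> Hinv h y \<le> Hinv h y'"
proof (rule ccontr)
  assume a: "y \<le> y'" "\<not> Hinv h y \<le> Hinv h y'"
  then have "h (Hinv h y') < h (Hinv h y)" using strict_mono_onD[OF h_sm] H_range by auto
  then have "clmp y' < clmp y" using h_H by simp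
  then show False using clmp_mono[OF a(1)] by simp
qed

lemma H_strict: "y \<in> {0..1} \<Longrightarrow> y' \<in> {0..1} \<Longrightarrow> y < y' \<Longrightarrow> Hinv h y < Hinv h y'"
proof -
  assume a: "y \<in> {0..1}" "y' \<in> {0..1}" "y < y'"
  have "Hinv h y \<le> Hinv h y'" using H_mono a by simp
  moreover have "Hinv h y \<noteq> Hinv h y'" using h_H[of y] h_H[of y'] clmp_id a by force
  ultimately show ?thesis by simp
qed

lemma H_cont: "continuous_on UNIV (Hinv h)"
proof -
  have "continuous_on (h ` {0..1}) (the_inv_into {0..1} h)"
    by (rule continuous_on_inv_into[OF h_cont compact_Icc h_inj])
  then have c1: "continuous_on {0..1} (the_inv_into {0..1} h)" using h_img by simp
  have c2: "continuous_on UNIV clmp" unfolding clmp_def by (intro continuous_intros)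
  show ?thesis unfolding Hinv_def
    by (rule continuous_on_compose2[OF c1 c2]) (use clmp_range in auto)
qed

lemma H_isCont: "isCont (Hinv h) y"
  using H_cont continuous_on_eq_continuous_at open_UNIV by blast

lemma transfer:
  assumes p: "\<And>k. 0 \<le> p k \<and> p k < 1"
    and eq: "\<And>x. x \<in> {0..1} \<Longrightarrow> prp (\<lambda>k. p k \<le> x) \<longlonglongrightarrow> x"
    and tl: "(\<lambda>k. t k - h (p k)) \<longlonglongrightarrow> 0"
    and A: "A \<longlonglongrightarrow> \<alpha>" and B: "B \<longlonglongrightarrow> \<beta>" and ab: "\<alpha> \<le> \<beta>"
    and P: "eventually (\<lambda>k. P k \<longleftrightarrow> A k \<le> t k \<and> t k < B k) sequentially"
  shows "prp P \<longlonglongrightarrow> Hinv h \<beta> - Hinv h \<alpha>"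
proof (rule sand[OF p eq])
  fix e :: real assume e: "e > 0"
  have e2: "e / 2 > 0" using e by simp
  obtain da where da: "da > 0" "\<And>y. \<bar>y - \<alpha>\<bar> < da \<Longrightarrow> \<bar>Hinv h y - Hinv h \<alpha>\<bar> < e / 2"
    using cont_eps[OF H_isCont e2] by blast
  obtain db where db: "db > 0" "\<And>y. \<bar>y - \<beta>\<bar> < db \<Longrightarrow> \<bar>Hinv h y - Hinv h \<beta>\<bar> < e / 2"
    using cont_eps[OF H_isCont e2] by blast
  define d where "d = min da db / 2"
  have d: "d > 0" "d < da" "d < db" using da db d_def by auto
  define x1 where "x1 = Hinv h (\<alpha> + d)"
  define x2 where "x2 = Hinv h (\<beta> - d)"
  define y1 where "y1 = (if 0 < Hinv h (\<alpha> - d) then Hinv h (\<alpha> - d) else -1)"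
  define y2 where "y2 = Hinv h (\<beta> + d)"
  have Hr: "\<And>y. clmp (Hinv h y) = Hinv h y" using clmp_id H_range by blast
  have a1: "\<bar>Hinv h (\<alpha> + d) - Hinv h \<alpha>\<bar> < e/2" "\<bar>Hinv h (\<alpha> - d) - Hinv h \<alpha>\<bar> < e/2"
    using da(2) d by auto
  have b1: "\<bar>Hinv h (\<beta> + d) - Hinv h \<beta>\<bar> < e/2" "\<bar>Hinv h (\<beta> - d) - Hinv h \<beta>\<bar> < e/2"
    using db(2) d by auto
  have cy1: "clmp y1 = Hinv h (\<alpha> - d)"
  proof (cases "0 < Hinv h (\<alpha> - d)")
    case True then show ?thesis using y1_def Hr by simp
  next
    case False then show ?thesis using y1_def H_range[of "\<alpha> - d"] by (simp add: clmp_def)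
  qed
  have L1: "Hinv h \<beta> - Hinv h \<alpha> - e \<le> clmp x2 - clmp x1"
    unfolding x1_def x2_def Hr using a1 b1 unfolding abs_less_iff by linarith
  have L2: "clmp y2 - clmp y1 \<le> Hinv h \<beta> - Hinv h \<alpha> + e"
    unfolding y2_def cy1 Hr using a1 b1 unfolding abs_less_iff by linarith
  have y12: "y1 \<le> y2"
  proof (cases "0 < Hinv h (\<alpha> - d)")
    case True then show ?thesis using y1_def y2_def H_mono[of "\<alpha> - d" "\<beta> + d"] ab d by simp
  next
    case False then show ?thesis using y1_def y2_def H_range[of "\<beta> + d"] by simp
  qed
  have d3: "d / 3 > 0" using d by simp
  have evs: "eventually (\<lambda>k. \<bar>t k - h (p k)\<bar> < d/3 \<and> \<bar>A k - \<alpha>\<bar> < d/3 \<and> \<bar>B k - \<beta>\<bar> < d/3 \<and> (P k \<longleftrightarrow> A k \<le> t k \<and> t k < B k)) sequentially"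
  proof -
    have 1: "eventually (\<lambda>k. dist (t k - h (p k)) 0 < d/3) sequentially" using tl[unfolded tendsto_iff, rule_format, OF d3] by simp
    have 2: "eventually (\<lambda>k. dist (A k) \<alpha> < d/3) sequentially" using A[unfolded tendsto_iff, rule_format, OF d3] by simp
    have 3: "eventually (\<lambda>k. dist (B k) \<beta> < d/3) sequentially" using B[unfolded tendsto_iff, rule_format, OF d3] by simp
    show ?thesis using 1 2 3 P by eventually_elim (auto simp: dist_real_def)
  qed
  have ev1: "eventually (\<lambda>k. x1 < p k \<and> p k \<le> x2 \<longrightarrow> P k) sequentially"
    using evs
  proof (rule eventually_mono)
    fix k assume k: "\<bar>t k - h (p k)\<bar> < d/3 \<and> \<bar>A k - \<alpha>\<bar> < d/3 \<and> \<bar>B k - \<beta>\<bar> < d/3 \<and> (P k \<longleftrightarrow> A k \<le> t k \<and> t k < B k)"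
    show "x1 < p k \<and> p k \<le> x2 \<longrightarrow> P k"
    proof
      assume xp: "x1 < p k \<and> p k \<le> x2"
      have pk: "p k \<in> {0..1}" using p[of k] by auto
      have "0 < x2" using xp H_range[of "\<alpha> + d"] x1_def by auto
      then have hp2: "h (p k) \<le> \<beta> - d" using H_i[OF pk] xp x2_def by auto
      have hp1: "h (p k) > \<alpha> + d" using H_ii[OF pk, of "\<alpha> + d"] xp x1_def by force
      have kk: "\<bar>t k - h (p k)\<bar> < d/3" "\<bar>A k - \<alpha>\<bar> < d/3" "\<bar>B k - \<beta>\<bar> < d/3" using k by auto
      have "A k \<le> t k" "t k < B k" using kk hp1 hp2 unfolding abs_less_iff by linarith+
      then show "P k" using k by blast
    qed
  qed
  have ev2: "eventually (\<lambda>k. P k \<longrightarrow> y1 < p k \<and> p k \<le> y2) sequentially"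
    using evs
  proof (rule eventually_mono)
    fix k assume k: "\<bar>t k - h (p k)\<bar> < d/3 \<and> \<bar>A k - \<alpha>\<bar> < d/3 \<and> \<bar>B k - \<beta>\<bar> < d/3 \<and> (P k \<longleftrightarrow> A k \<le> t k \<and> t k < B k)"
    show "P k \<longrightarrow> y1 < p k \<and> p k \<le> y2"
    proof
      assume Pk: "P k"
      have pk: "p k \<in> {0..1}" using p[of k] by auto
      have kk: "\<bar>t k - h (p k)\<bar> < d/3" "\<bar>A k - \<alpha>\<bar> < d/3" "\<bar>B k - \<beta>\<bar> < d/3" using k by auto
      have "A k \<le> t k" "t k < B k" using k Pk by blast+
      then have hp: "h (p k) < \<beta> + d" "h (p k) > \<alpha> - d" using kk unfolding abs_less_iff by linarith+
      have "p k \<le> y2" using H_ii[OF pk] hp y2_def by auto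
      moreover have "y1 < p k"
      proof (cases "0 < Hinv h (\<alpha> - d)")
        case True
        have "\<not> p k \<le> Hinv h (\<alpha> - d)" using H_i[OF pk _ True] hp by force
        then show ?thesis using True y1_def by simp
      next
        case False then show ?thesis using y1_def p[of k] by simp
      qed
      ultimately show "y1 < p k \<and> p k \<le> y2" by simp
    qed
  qed
  show "\<exists>x1 x2 y1 y2. Hinv h \<beta> - Hinv h \<alpha> - e \<le> clmp x2 - clmp x1 \<and> y1 \<le> y2 \<and> clmp y2 - clmp y1 \<le> Hinv h \<beta> - Hinv h \<alpha> + e \<and>
      eventually (\<lambda>k. x1 < p k \<and> p k \<le> x2 \<longrightarrow> P k) sequentially \<and>
      eventually (\<lambda>k. P k \<longrightarrow> y1 < p k \<and> p k \<le> y2) sequentially"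
    using L1 L2 y12 ev1 ev2 by (intro exI[of _ x1] exI[of _ x2] exI[of _ y1] exI[of _ y2]) simp
qed

end


lemma Nk_top:
  assumes K0: "\<forall>k\<ge>1. K k > 0" and Kt: "filterlim K at_top sequentially"
  shows "filterlim (\<lambda>k. length (zeck (K k))) at_top sequentially"
  unfolding filterlim_at_top
proof (intro allI)
  fix M :: nat
  have "eventually (\<lambda>k. FF M \<le> K k) sequentially" using Kt unfolding filterlim_at_top by blast
  moreover have "eventually (\<lambda>k. 1 \<le> k) sequentially" by (rule eventually_ge_at_top)
  ultimately show "eventually (\<lambda>k. M \<le> length (zeck (K k))) sequentially"
  proof eventually_elim
    case (elim k)
    then have m: "1 \<le> K k" using K0 by auto
    show ?case
    proof (rule ccontr)
      assume "\<not> M \<le> length (zeck (K k))"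
      then have "FF (Suc (length (zeck (K k)))) \<le> FF M" by (intro FF_mono) simp
      then show False using zeck_len[OF m] elim by simp
    qed
  qed
qed

lemma frac_shift: "real N \<le> x \<Longrightarrow> x < real N + 1 \<Longrightarrow> frac x = x - real N"
proof -
  assume a: "real N \<le> x" "x < real N + 1"
  have "\<lfloor>x\<rfloor> = int N" by (rule floor_unique) (use a in auto)
  then show ?thesis unfolding frac_def by simp
qed

definition fn :: "(real \<Rightarrow> real) \<Rightarrow> nat \<Rightarrow> real \<Rightarrow> real" where
  "fn f n p = (f (real n + p) - f (real n)) / (f (real n + 1) - f (real n))"

lemma uc_FF: "uniform_continuation f \<Longrightarrow> 1 \<le> n \<Longrightarrow> f (real n) = real (FF n)"
  unfolding uniform_continuation_def by auto

lemma inv_point: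
  assumes uc: "uniform_continuation f" and m: "1 \<le> m"
  shows "frac (the_inv_into {1..} f (real m)) \<in> {0..<1} \<and>
         tt m = fn f (length (zeck m)) (frac (the_inv_into {1..} f (real m)))"
proof -
  define N where "N = length (zeck m)"
  have z: "1 \<le> N" "FF N \<le> m" "m < FF (Suc N)" using zeck_len[OF m] N_def by auto
  have sm: "strict_mono_on {1..} f" and ct: "continuous_on {1..} f" using uc uniform_continuation_def by auto
  have fN: "f (real N) = real (FF N)" using uc_FF[OF uc z(1)] .
  have fN1: "f (real N + 1) = real (FF (Suc N))" using uc_FF[OF uc, of "Suc N"] by (simp add: add.commute)
  have "continuous_on {real N..real N + 1} f" using ct by (rule continuous_on_subset) (use z(1) in auto)
  then obtain x where x: "real N \<le> x" "x \<le> real N + 1" "f x = real m"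
    using IVT'[of f "real N" "real m" "real N + 1"] fN fN1 z by auto
  have "x \<noteq> real N + 1" using x fN1 z by auto
  then have x2: "x < real N + 1" using x by simp
  have x1: "x \<in> {1..}" using x z by auto
  have inv: "the_inv_into {1..} f (real m) = x"
    by (rule the_inv_into_f_eq[OF strict_mono_on_imp_inj_on[OF sm] x(3) x1])
  have fr: "frac x = x - real N" by (rule frac_shift[OF x(1) x2])
  have "fn f N (frac x) = (real m - real (FF N)) / (real (FF (Suc N)) - real (FF N))"
    unfolding fn_def fr using x fN fN1 by simp
  also have "\<dots> = tt m" unfolding tt_def N_def[symmetric] using FF_pred_rec[OF z(1)] by simp
  finally show ?thesis using inv N_def frac_lt_1 frac_ge_0 by auto
qed

lemma uc_h:
  assumes uc: "uniform_continuation f"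
  obtains h where "uniform_limit {0..1} (fn f) h sequentially" "hgood h"
proof -
  obtain h where h: "uniform_limit {0..1} (\<lambda>n p. (f (real n + p) - f (real n)) / (f (real n + 1) - f (real n))) h sequentially"
    "strict_mono_on {0..1} h" "continuous_on {0..1} h"
    using uc unfolding uniform_continuation_def by blast
  have ul: "uniform_limit {0..1} (fn f) h sequentially" using h(1) unfolding fn_def[abs_def] by simp
  have l0: "(\<lambda>n. fn f n 0) \<longlonglongrightarrow> h 0" using tendsto_uniform_limitI[OF ul, of 0] by simp
  moreover have "(\<lambda>n. fn f n 0) = (\<lambda>n. 0)" unfolding fn_def by simp
  ultimately have h0: "h 0 = 0" using LIMSEQ_unique tendsto_const by metis
  have l1: "(\<lambda>n. fn f n 1) \<longlonglongrightarrow> h 1" using tendsto_uniform_limitI[OF ul, of 1] by simp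
  moreover have "eventually (\<lambda>n. fn f n 1 = 1) sequentially"
    using eventually_ge_at_top[of 1]
  proof (rule eventually_mono)
    fix n :: nat assume n: "1 \<le> n"
    have "f (real n) = real (FF n)" "f (real n + 1) = real (FF (Suc n))"
      using uc_FF[OF uc n] uc_FF[OF uc, of "Suc n"] by (auto simp: add.commute)
    moreover have "FF n < FF (Suc n)" using FF_strict[OF n] by simp
    ultimately show "fn f n 1 = 1" unfolding fn_def by simp
  qed
  then have "(\<lambda>n. fn f n 1) \<longlonglongrightarrow> 1" by (rule tendsto_eventually)
  ultimately have h1: "h 1 = 1" using LIMSEQ_unique by metis
  show ?thesis using that ul h h0 h1 hgood_def by blast
qed


lemma chat_ge1: "blk c \<Longrightarrow> 1 \<le> chat c"
proof -
  assume b: "blk c"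
  then obtain c' where c: "c = 1 # c'" unfolding blk_def by (cases c) auto
  have "\<forall>x\<in>set c'. x \<le> 1" using blk_digits[OF b] c by auto
  then have "0 \<le> chat c'" using chat_bounds by blast
  then show ?thesis using c gomega_pos by simp
qed

lemma alpha_le_beta: "alpha c \<le> beta c"
  unfolding alpha_def beta_def using gphi_gt1 gomega_pos
  by (intro mult_left_mono) auto

lemma beta_nonneg: "blk c \<Longrightarrow> 0 \<le> beta c"
proof -
  assume b: "blk c"
  have "0 \<le> gomega ^ (length c - 1 + last c)" using gomega_pos by simp
  then have "0 \<le> chat c + gomega ^ (length c - 1 + last c) - 1" using chat_ge1[OF b] by linarith
  then show ?thesis unfolding beta_def using gphi_gt1 by simp
qed

lemma LB_prop_prp: "LB_prop K s Q = prp (\<lambda>k. s \<le> length (zeck (K k)) \<and> Q (take s (zeck (K k))))"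
  by (rule ext) (simp add: LB_prop_def prp_def)

lemma leading_blk: "is_leading_block s b \<Longrightarrow> 1 \<le> s \<Longrightarrow> blk b \<and> length b = s"
proof -
  assume a: "is_leading_block s b" "1 \<le> s"
  then obtain m where m: "m > 0" "s \<le> length (zeck m)" "take s (zeck m) = b"
    unfolding is_leading_block_def has_LB_def by blast
  have zp: "zw (zeck m)" "zeck m \<noteq> []" "hd (zeck m) = 1" using zeck_props[of m] m by auto
  have "zw (take s (zeck m) @ drop s (zeck m))" using zp by simp
  then have "zw (take s (zeck m))" unfolding zw_append by simp
  then have w: "zw b" using m(3) by simp
  have ne: "b \<noteq> []" using m a by auto
  have "hd (take s (zeck m)) = hd (zeck m)" using a(2) zp(2) by (simp add: hd_take)
  then have "hd b = 1" using m(3) zp by simp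
  then show ?thesis using w ne m unfolding blk_def by auto
qed

lemma dir1:
  assumes K0: "\<forall>k\<ge>1. K k > 0" and Kt: "filterlim K at_top sequentially"
    and uc: "uniform_continuation f"
    and eqd: "equidistributed (\<lambda>n. the_inv_into {1..} f (real (K n)))"
  shows "cont_LB_dist K"
proof -
  obtain h where ul: "uniform_limit {0..1} (fn f) h sequentially" and hg: "hgood h"
    using uc_h[OF uc] by blast
  define N where "N k = length (zeck (K k))" for k
  define p where "p k = frac (the_inv_into {1..} f (real (K k)))" for k
  define t where "t k = tt (K k)" for k
  have p01: "\<And>k. 0 \<le> p k \<and> p k < 1" unfolding p_def using frac_ge_0 frac_lt_1 by auto
  have eq: "\<And>x. x \<in> {0..1} \<Longrightarrow> prp (\<lambda>k. p k \<le> x) \<longlonglongrightarrow> x"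
    using eqd unfolding equidistributed_def prp_def p_def by blast
  have Ntop: "filterlim N at_top sequentially" unfolding N_def[abs_def] using Nk_top[OF K0 Kt] .
  have tfn: "\<And>k. 1 \<le> k \<Longrightarrow> t k = fn f (N k) (p k)"
  proof -
    fix k :: nat assume "1 \<le> k"
    then have "1 \<le> K k" using K0 by auto
    then show "t k = fn f (N k) (p k)" using inv_point[OF uc] t_def N_def p_def by auto
  qed
  have tl: "(\<lambda>k. t k - h (p k)) \<longlonglongrightarrow> 0"
    unfolding tendsto_iff
  proof (intro allI impI)
    fix e :: real assume e: "e > 0"
    have "eventually (\<lambda>n. \<forall>x\<in>{0..1}. dist (fn f n x) (h x) < e) sequentially"
      using ul e unfolding uniform_limit_iff by blast
    then have "eventually (\<lambda>k. \<forall>x\<in>{0..1}. dist (fn f (N k) x) (h x) < e) sequentially"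
      using Ntop unfolding filterlim_iff by blast
    moreover have "eventually (\<lambda>k. 1 \<le> k) sequentially" by (rule eventually_ge_at_top)
    ultimately show "eventually (\<lambda>k. dist (t k - h (p k)) 0 < e) sequentially"
    proof eventually_elim
      case (elim k)
      then have "dist (fn f (N k) (p k)) (h (p k)) < e" using p01[of k] by auto
      then show ?case using tfn[of k] elim by (simp add: dist_real_def)
    qed
  qed
  have evN: "\<And>c::nat list. eventually (\<lambda>k. 1 \<le> k \<and> length c < N k) sequentially"
  proof -
    fix c :: "nat list"
    have "eventually (\<lambda>k. Suc (length c) \<le> N k) sequentially" using Ntop unfolding filterlim_at_top by blast
    moreover have "eventually (\<lambda>k. 1 \<le> k) sequentially" by (rule eventually_ge_at_top)
    ultimately show "eventually (\<lambda>k. 1 \<le> k \<and> length c < N k) sequentially" by eventually_elim auto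
  qed
  have blkEQ: "prp (\<lambda>k. length c \<le> N k \<and> take (length c) (zeck (K k)) = c) \<longlonglongrightarrow> Hinv h (beta c) - Hinv h (alpha c)"
    if b: "blk c" for c
  proof (rule transfer[OF hg p01 eq tl])
    show "(\<lambda>k. aa c (N k)) \<longlonglongrightarrow> alpha c" by (rule filterlim_compose[OF aa_lim[OF b] Ntop])
    show "(\<lambda>k. bb c (N k)) \<longlonglongrightarrow> beta c" by (rule filterlim_compose[OF bb_lim[OF b] Ntop])
    show "alpha c \<le> beta c" by (rule alpha_le_beta)
    show "eventually (\<lambda>k. (length c \<le> N k \<and> take (length c) (zeck (K k)) = c) \<longleftrightarrow> aa c (N k) \<le> t k \<and> t k < bb c (N k)) sequentially"
      using evN[of c]
    proof (rule eventually_mono)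
      fix k assume k: "1 \<le> k \<and> length c < N k"
      then have "1 \<le> K k" using K0 by auto
      then show "(length c \<le> N k \<and> take (length c) (zeck (K k)) = c) \<longleftrightarrow> aa c (N k) \<le> t k \<and> t k < bb c (N k)"
        using key_eq_t[OF b, of "K k"] k N_def t_def by auto
    qed
  qed
  have blkLE: "prp (\<lambda>k. length c \<le> N k \<and> lex_le (take (length c) (zeck (K k))) c) \<longlonglongrightarrow> Hinv h (beta c)"
    if b: "blk c" for c
  proof -
    have "prp (\<lambda>k. length c \<le> N k \<and> lex_le (take (length c) (zeck (K k))) c) \<longlonglongrightarrow> Hinv h (beta c) - Hinv h 0"
    proof (rule transfer[OF hg p01 eq tl])
      show "(\<lambda>k. 0) \<longlonglongrightarrow> (0::real)" by simp
      show "(\<lambda>k. bb c (N k)) \<longlonglongrightarrow> beta c" by (rule filterlim_compose[OF bb_lim[OF b] Ntop])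
      show "0 \<le> beta c" by (rule beta_nonneg[OF b])
      show "eventually (\<lambda>k. (length c \<le> N k \<and> lex_le (take (length c) (zeck (K k))) c) \<longleftrightarrow> 0 \<le> t k \<and> t k < bb c (N k)) sequentially"
        using evN[of c]
      proof (rule eventually_mono)
        fix k assume k: "1 \<le> k \<and> length c < N k"
        then have "1 \<le> K k" using K0 by auto
        then show "(length c \<le> N k \<and> lex_le (take (length c) (zeck (K k))) c) \<longleftrightarrow> 0 \<le> t k \<and> t k < bb c (N k)"
          using key_le_t[OF b, of "K k"] tt_range[of "K k"] k N_def t_def by auto
      qed
    qed
    then show ?thesis using H0[OF hg] by simp
  qed
  show ?thesis unfolding cont_LB_dist_def
  proof (intro conjI)
    show "\<forall>s\<ge>2. \<forall>b. is_leading_block s b \<longrightarrow> convergent (LB_prop K s (\<lambda>x. x = b))"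
    proof (intro allI impI)
      fix s :: nat and b assume s: "2 \<le> s" and lb: "is_leading_block s b"
      then have bb: "blk b" "length b = s" using leading_blk[of s b] by auto
      show "convergent (LB_prop K s (\<lambda>x. x = b))"
        unfolding LB_prop_prp convergent_def using blkEQ[OF bb(1)] bb(2) N_def by auto
    qed
    have lim1: "\<And>\<mu> (s::nat). \<mu> \<in> Fstar \<Longrightarrow> \<mu> 1 = 1 \<Longrightarrow> 1 \<le> s \<Longrightarrow>
        lim (LB_prop K s (\<lambda>x. lex_le x (restr \<mu> s))) = Hinv h (beta (restr \<mu> s))"
    proof -
      fix \<mu> and s :: nat assume a: "\<mu> \<in> Fstar" "\<mu> 1 = 1" "1 \<le> s"
      have "LB_prop K s (\<lambda>x. lex_le x (restr \<mu> s)) \<longlonglongrightarrow> Hinv h (beta (restr \<mu> s))"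
        unfolding LB_prop_prp using blkLE[OF restr_blk(1)[OF a]] restr_blk(2)[OF a] N_def by simp
      then show "lim (LB_prop K s (\<lambda>x. lex_le x (restr \<mu> s))) = Hinv h (beta (restr \<mu> s))" by (rule limI)
    qed
    have lim2: "\<And>\<mu>. \<mu> \<in> Fstar \<Longrightarrow> \<mu> 1 = 1 \<Longrightarrow>
       (\<lambda>s. lim (LB_prop K s (\<lambda>x. lex_le x (restr \<mu> s)))) \<longlonglongrightarrow> Hinv h (gphi * (dotF \<mu> - 1))"
    proof -
      fix \<mu> assume a: "\<mu> \<in> Fstar" "\<mu> 1 = 1"
      have "(\<lambda>s. Hinv h (beta (restr \<mu> s))) \<longlonglongrightarrow> Hinv h (gphi * (dotF \<mu> - 1))"
        by (rule isCont_tendsto_compose[OF H_isCont[OF hg] beta_restr_lim[OF a]])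
      moreover have "eventually (\<lambda>s. Hinv h (beta (restr \<mu> s)) = lim (LB_prop K s (\<lambda>x. lex_le x (restr \<mu> s)))) sequentially"
        using eventually_ge_at_top[of 1] by (rule eventually_mono) (simp add: lim1[OF a])
      ultimately show "(\<lambda>s. lim (LB_prop K s (\<lambda>x. lex_le x (restr \<mu> s)))) \<longlonglongrightarrow> Hinv h (gphi * (dotF \<mu> - 1))"
        by (rule Lim_transform_eventually)
    qed
    show "\<forall>\<mu>\<in>Fstar. \<mu> 1 = 1 \<longrightarrow> convergent (\<lambda>s. lim (LB_prop K s (\<lambda>x. lex_le x (restr \<mu> s))))"
      using lim2 unfolding convergent_def by blast
    show "\<exists>g. g 0 = 0 \<and> g 1 = 1 \<and>
        (\<forall>\<mu>\<in>Fstar. \<mu> 1 = 1 \<longrightarrow> g (gphi * (dotF \<mu> - 1)) = lim (\<lambda>s. lim (LB_prop K s (\<lambda>x. lex_le x (restr \<mu> s))))) \<and>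
        continuous_on {0..1} g \<and> strict_mono_on {0..1} g \<and> g ` {0..1} \<subseteq> {0..1}"
    proof (intro exI[of _ "Hinv h"] conjI)
      show "Hinv h 0 = 0" by (rule H0[OF hg])
      show "Hinv h 1 = 1" by (rule H1[OF hg])
      show "\<forall>\<mu>\<in>Fstar. \<mu> 1 = 1 \<longrightarrow> Hinv h (gphi * (dotF \<mu> - 1)) = lim (\<lambda>s. lim (LB_prop K s (\<lambda>x. lex_le x (restr \<mu> s))))"
        using lim2 limI by (metis (no_types, lifting))
      show "continuous_on {0..1} (Hinv h)" using H_cont[OF hg] by (rule continuous_on_subset) simp
      show "strict_mono_on {0..1} (Hinv h)" using H_strict[OF hg] by (auto intro: strict_mono_onI)
      show "Hinv h ` {0..1} \<subseteq> {0..1}" using H_range[OF hg] by auto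
    qed
  qed
qed


definition mkf :: "(real \<Rightarrow> real) \<Rightarrow> real \<Rightarrow> real" where
  "mkf h x = real (FF (nat \<lfloor>x\<rfloor>)) + real (FF (nat \<lfloor>x\<rfloor> - 1)) * h (frac x)"

context
  fixes h :: "real \<Rightarrow> real"
  assumes hg: "hgood h"
begin

lemma mkf_at: "1 \<le> n \<Longrightarrow> p \<in> {0..1} \<Longrightarrow> mkf h (real n + p) = real (FF n) + real (FF (n - 1)) * h p"
proof -
  assume n: "1 \<le> n" and p: "p \<in> {0..1}"
  show ?thesis
  proof (cases "p < 1")
    case True
    have fl: "\<lfloor>real n + p\<rfloor> = int n" by (rule floor_unique) (use p True in auto)
    have "frac (real n + p) = p" using frac_shift[of n "real n + p"] p True by simp
    then show ?thesis unfolding mkf_def fl by simp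
  next
    case False
    then have p1: "p = 1" using p by simp
    have fl: "\<lfloor>real n + p\<rfloor> = int (Suc n)" by (rule floor_unique) (use p1 in auto)
    have frac0: "frac (real n + p) = 0" using p1 by (simp add: frac_def)
    have "nat (int (Suc n)) = Suc n" by simp
    then have "mkf h (real n + p) = real (FF (Suc n))" unfolding mkf_def fl frac0 h0[OF hg] by (simp only:)
    then show ?thesis using p1 h1[OF hg] FF_pred_rec[OF n] by simp
  qed
qed

lemma mkf_nat: "1 \<le> n \<Longrightarrow> mkf h (real n) = real (FF n)"
  using mkf_at[of n 0] h0[OF hg] by simp

lemma mkf_decomp: "1 \<le> x \<Longrightarrow> \<exists>n p. 1 \<le> n \<and> p \<in> {0..<1} \<and> x = real n + p"
proof -
  assume x: "1 \<le> x"
  define n where "n = nat \<lfloor>x\<rfloor>"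
  have fl1: "(1::int) \<le> \<lfloor>x\<rfloor>" using x by (simp add: le_floor_iff)
  then have n1: "1 \<le> n" using n_def by linarith
  have "real n = of_int \<lfloor>x\<rfloor>" using fl1 n_def by simp
  then have "x = real n + frac x" by (simp add: frac_def)
  note this n1
  then show ?thesis using frac_ge_0 frac_lt_1 by (intro exI[of _ n] exI[of _ "frac x"]) auto
qed

lemma h_lt1: "p \<in> {0..<1} \<Longrightarrow> h p < 1"
  using strict_mono_onD[OF h_sm[OF hg], of p 1] h1[OF hg] by auto

lemma h_ge0: "p \<in> {0..1} \<Longrightarrow> 0 \<le> h p"
  using h_range[OF hg] by auto

lemma mkf_strict: "strict_mono_on {1..} (mkf h)"
proof (rule strict_mono_onI)
  fix x y :: real assume x: "x \<in> {1..}" and y: "y \<in> {1..}" and xy: "x < y"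
  have x1: "1 \<le> x" and y1: "1 \<le> y" using x y by auto
  obtain n p where np: "1 \<le> n" "p \<in> {0..<1}" "x = real n + p" using mkf_decomp[OF x1] by blast
  obtain m q where mq: "1 \<le> m" "q \<in> {0..<1}" "y = real m + q" using mkf_decomp[OF y1] by blast
  have fx: "mkf h x = real (FF n) + real (FF (n - 1)) * h p" using mkf_at np by auto
  have fy: "mkf h y = real (FF m) + real (FF (m - 1)) * h q" using mkf_at mq by auto
  have pos: "real (FF (n - 1)) > 0" using FF_pos'[of "n - 1"] by simp
  show "mkf h x < mkf h y"
  proof (cases "n = m")
    case True
    then have "p < q" using np mq xy by simp
    then have "h p < h q" using strict_mono_onD[OF h_sm[OF hg], of p q] np mq by auto
    then show ?thesis using fx fy True pos by simp
  next
    case False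
    have "n < m"
    proof (rule ccontr)
      assume "\<not> n < m" then have "m < n" using False by simp
      then have "real m + 1 \<le> real n" by simp
      then show False using np mq xy by simp
    qed
    have "real (FF (n - 1)) * h p < real (FF (n - 1)) * 1"
      using h_lt1[OF np(2)] pos by (intro mult_strict_left_mono) auto
    then have "mkf h x < real (FF (Suc n))" using fx FF_pred_rec[OF np(1)] by simp
    also have "\<dots> \<le> real (FF m)" using FF_mono[of "Suc n" m] \<open>n < m\<close> by simp
    also have "\<dots> \<le> mkf h y" using fy h_ge0[of q] mq by simp
    finally show ?thesis .
  qed
qed

lemma mkf_cont_piece: "1 \<le> n \<Longrightarrow> continuous_on {real n..real n + 1} (mkf h)"
proof -
  assume n: "1 \<le> n"
  have "continuous_on {real n..real n + 1} (\<lambda>x. real (FF n) + real (FF (n - 1)) * h (x - real n))"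
    by (intro continuous_intros continuous_on_compose2[OF h_cont[OF hg]]) auto
  moreover have "\<And>x. x \<in> {real n..real n + 1} \<Longrightarrow> mkf h x = real (FF n) + real (FF (n - 1)) * h (x - real n)"
    using mkf_at[OF n] by (metis add_diff_cancel_left' atLeastAtMost_iff diff_ge_0_iff_ge le_add_diff_inverse le_diff_eq add.commute)
  ultimately show ?thesis using continuous_on_cong by (metis (no_types, lifting))
qed

lemma mkf_cont_upto: "continuous_on {1..real (Suc M)} (mkf h)"
proof (induction M)
  case 0
  show ?case using mkf_cont_piece[of 1] by simp
next
  case (Suc M)
  have "{1..real (Suc (Suc M))} = {1..real (Suc M)} \<union> {real (Suc M)..real (Suc M) + 1}" by auto
  then show ?case using continuous_on_closed_Un[OF _ _ Suc mkf_cont_piece[of "Suc M"]] by simp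
qed

lemma mkf_cont: "continuous_on {1..} (mkf h)"
  unfolding continuous_on_eq_continuous_within
proof
  fix x :: real assume x: "x \<in> {1..}"
  define M where "M = nat \<lceil>x\<rceil>"
  have xM: "x < real (Suc M)" using M_def by linarith
  have "continuous (at x within {1..real (Suc M)}) (mkf h)"
    using mkf_cont_upto[of M] x xM unfolding continuous_on_eq_continuous_within by auto
  moreover have "at x within {1..} = at x within {1..real (Suc M)}"
    by (rule at_within_nhd[of x "{..<real (Suc M)}"]) (use xM in auto)
  ultimately show "continuous (at x within {1..}) (mkf h)" by simp
qed

lemma mkf_fn: "1 \<le> n \<Longrightarrow> p \<in> {0..1} \<Longrightarrow> fn (mkf h) n p = h p"
proof -
  assume n: "1 \<le> n" and p: "p \<in> {0..1}"
  have a: "mkf h (real n + p) = real (FF n) + real (FF (n - 1)) * h p" using mkf_at[OF n p] .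
  have b: "mkf h (real n + 1) = real (FF n) + real (FF (n - 1))" using mkf_at[OF n, of 1] h1[OF hg] by simp
  have c: "mkf h (real n) = real (FF n)" using mkf_nat[OF n] .
  show ?thesis unfolding fn_def a b c using FF_pos'[of "n - 1"] by simp
qed

lemma mkf_uc: "uniform_continuation (mkf h)"
  unfolding uniform_continuation_def
proof (intro conjI)
  show "strict_mono_on {1..} (mkf h)" by (rule mkf_strict)
  show "continuous_on {1..} (mkf h)" by (rule mkf_cont)
  show "\<forall>n. 1 \<le> n \<longrightarrow> mkf h (real n) = real (FF n)" using mkf_nat by auto
  have "uniform_limit {0..1} (fn (mkf h)) h sequentially"
    unfolding uniform_limit_iff
  proof (intro allI impI)
    fix e :: real assume e: "e > 0"
    show "\<forall>\<^sub>F n in sequentially. \<forall>x\<in>{0..1}. dist (fn (mkf h) n x) (h x) < e"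
      using eventually_ge_at_top[of 1] by (rule eventually_mono) (use mkf_fn e in auto)
  qed
  then show "\<exists>h'. uniform_limit {0..1} (\<lambda>n p. (mkf h (real n + p) - mkf h (real n)) / (mkf h (real n + 1) - mkf h (real n))) h' sequentially \<and>
      strict_mono_on {0..1} h' \<and> continuous_on {0..1} h'"
    using h_sm[OF hg] h_cont[OF hg] unfolding fn_def[abs_def] by blast
qed

end


lemma inv_mkf:
  assumes g: "hgood g" and m: "1 \<le> m"
  shows "frac (the_inv_into {1..} (mkf (Hinv g)) (real m)) = g (tt m)"
proof -
  define h where "h = Hinv g"
  have hh: "hgood h" unfolding hgood_def h_def
  proof (intro conjI)
    show "continuous_on {0..1} (Hinv g)" using H_cont[OF g] by (rule continuous_on_subset) simp
    show "strict_mono_on {0..1} (Hinv g)" using H_strict[OF g] by (auto intro: strict_mono_onI)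
    show "Hinv g 0 = 0" by (rule H0[OF g])
    show "Hinv g 1 = 1" by (rule H1[OF g])
  qed
  define N where "N = length (zeck m)"
  have z: "1 \<le> N" using zeck_len[OF m] N_def by auto
  have t01: "0 \<le> tt m" "tt m < 1" using tt_range[OF m] by auto
  define q where "q = g (tt m)"
  have q1: "q < 1" using strict_mono_onD[OF h_sm[OF g], of "tt m" 1] h1[OF g] t01 q_def by auto
  have q0: "0 \<le> q" using h_range[OF g, of "tt m"] t01 q_def by auto
  have hq: "h q = tt m" using H_h[OF g, of "tt m"] t01 h_def q_def by auto
  have "mkf h (real N + q) = real (FF N) + real (FF (N - 1)) * tt m"
    using mkf_at[OF hh z, of q] q0 q1 hq by simp
  also have "\<dots> = real m"
    unfolding tt_def N_def[symmetric] using FF_pos'[of "N - 1"] by simp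
  finally have fx: "mkf h (real N + q) = real m" .
  have "the_inv_into {1..} (mkf h) (real m) = real N + q"
    by (rule the_inv_into_f_eq[OF strict_mono_on_imp_inj_on[OF mkf_strict[OF hh]] fx]) (use z q0 in auto)
  moreover have "frac (real N + q) = q" using frac_shift[of N "real N + q"] q0 q1 by simp
  ultimately show ?thesis using h_def q_def by simp
qed

lemma prp_cong: "(\<And>k. 1 \<le> k \<Longrightarrow> P k = Q k) \<Longrightarrow> prp P = prp Q"
proof (rule ext)
  fix n assume a: "\<And>k. 1 \<le> k \<Longrightarrow> P k = Q k"
  have "{k \<in> {1..n}. P k} = {k \<in> {1..n}. Q k}" using a by auto
  then show "prp P n = prp Q n" unfolding prp_def by simp
qed

lemma inner_conv:
  assumes K0: "\<forall>k\<ge>1. K k > 0"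
    and C1: "\<forall>s\<ge>2. \<forall>b. is_leading_block s b \<longrightarrow> convergent (LB_prop K s (\<lambda>x. x = b))"
    and s: "2 \<le> s"
  shows "convergent (LB_prop K s (\<lambda>x. lex_le x c))"
proof -
  define B where "B = {b. is_leading_block s b \<and> lex_le b c}"
  define S where "S b n = {k \<in> {1..n}. s \<le> length (zeck (K k)) \<and> take s (zeck (K k)) = b}" for b n
  have Bsub: "B \<subseteq> {xs. set xs \<subseteq> {0, 1} \<and> length xs = s}"
  proof
    fix b assume "b \<in> B"
    then have "blk b" "length b = s" using leading_blk[of s b] s B_def by auto
    moreover then have "set b \<subseteq> {0, 1}" using blk_digits by fastforce
    ultimately show "b \<in> {xs. set xs \<subseteq> {0, 1} \<and> length xs = s}" by simp
  qed
  have finB: "finite B" by (rule finite_subset[OF Bsub finite_lists_length_eq]) simp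
  have seteq: "{k \<in> {1..n}. s \<le> length (zeck (K k)) \<and> lex_le (take s (zeck (K k))) c} = (\<Union>b\<in>B. S b n)" for n
  proof
    show "{k \<in> {1..n}. s \<le> length (zeck (K k)) \<and> lex_le (take s (zeck (K k))) c} \<subseteq> (\<Union>b\<in>B. S b n)"
    proof
      fix k assume k: "k \<in> {k \<in> {1..n}. s \<le> length (zeck (K k)) \<and> lex_le (take s (zeck (K k))) c}"
      then have "K k > 0" using K0 by auto
      then have "is_leading_block s (take s (zeck (K k)))"
        unfolding is_leading_block_def has_LB_def using k by blast
      then have "take s (zeck (K k)) \<in> B" using k B_def by auto
      then show "k \<in> (\<Union>b\<in>B. S b n)" using k S_def by blast
    qed
    show "(\<Union>b\<in>B. S b n) \<subseteq> {k \<in> {1..n}. s \<le> length (zeck (K k)) \<and> lex_le (take s (zeck (K k))) c}"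
      using B_def S_def by auto
  qed
  have cardeq: "card {k \<in> {1..n}. s \<le> length (zeck (K k)) \<and> lex_le (take s (zeck (K k))) c} = (\<Sum>b\<in>B. card (S b n))" for n
    unfolding seteq by (rule card_UN_disjoint[OF finB]) (auto simp: S_def)
  have eqf: "LB_prop K s (\<lambda>x. lex_le x c) = (\<lambda>n. \<Sum>b\<in>B. LB_prop K s (\<lambda>x. x = b) n)"
  proof (rule ext)
    fix n
    show "LB_prop K s (\<lambda>x. lex_le x c) n = (\<Sum>b\<in>B. LB_prop K s (\<lambda>x. x = b) n)"
      unfolding LB_prop_def cardeq S_def by (simp add: sum_divide_distrib)
  qed
  have "\<forall>b\<in>B. convergent (LB_prop K s (\<lambda>x. x = b))" using C1 s B_def by auto
  then have "(\<lambda>n. \<Sum>b\<in>B. LB_prop K s (\<lambda>x. x = b) n) \<longlonglongrightarrow> (\<Sum>b\<in>B. lim (LB_prop K s (\<lambda>x. x = b)))"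
    by (intro tendsto_sum) (simp add: convergent_LIMSEQ_iff)
  then show ?thesis unfolding eqf convergent_def by blast
qed


lemma ev_obtain: "eventually P sequentially \<Longrightarrow> eventually Q sequentially \<Longrightarrow> \<exists>s::nat. P s \<and> Q s \<and> s \<ge> M"
proof -
  assume "eventually P sequentially" "eventually Q sequentially"
  then have "eventually (\<lambda>s. P s \<and> Q s \<and> s \<ge> M) sequentially"
    using eventually_ge_at_top[of M] by eventually_elim auto
  then obtain N0 where "\<forall>s\<ge>N0. P s \<and> Q s \<and> s \<ge> M" unfolding eventually_sequentially by blast
  then show ?thesis by blast
qed

lemma dir2:
  assumes K0: "\<forall>k\<ge>1. K k > 0" and Kt: "filterlim K at_top sequentially"
    and C: "cont_LB_dist K"
  shows "\<exists>f. uniform_continuation f \<and> equidistributed (\<lambda>n. the_inv_into {1..} f (real (K n)))"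
proof -
  have C1: "\<forall>s\<ge>2. \<forall>b. is_leading_block s b \<longrightarrow> convergent (LB_prop K s (\<lambda>x. x = b))"
    and C2: "\<forall>\<mu>\<in>Fstar. \<mu> 1 = 1 \<longrightarrow> convergent (\<lambda>s. lim (LB_prop K s (\<lambda>x. lex_le x (restr \<mu> s))))"
    using C unfolding cont_LB_dist_def by auto
  obtain g where g0: "g 0 = 0" and g1: "g 1 = 1"
    and gv: "\<forall>\<mu>\<in>Fstar. \<mu> 1 = 1 \<longrightarrow> g (gphi * (dotF \<mu> - 1)) = lim (\<lambda>s. lim (LB_prop K s (\<lambda>x. lex_le x (restr \<mu> s))))"
    and gc: "continuous_on {0..1} g" and gs: "strict_mono_on {0..1} g"
    using C unfolding cont_LB_dist_def by blast
  have hg: "hgood g" unfolding hgood_def using g0 g1 gc gs by blast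
  define N where "N k = length (zeck (K k))" for k
  have Ntop: "filterlim N at_top sequentially" unfolding N_def[abs_def] using Nk_top[OF K0 Kt] .
  define Lp where "Lp \<mu> s = LB_prop K s (\<lambda>x. lex_le x (restr \<mu> s))" for \<mu> s
  define Q where "Q \<mu> s k = (s \<le> N k \<and> lex_le (take s (zeck (K k))) (restr \<mu> s))" for \<mu> s k
  have LpQ: "Lp \<mu> s = prp (Q \<mu> s)" for \<mu> s unfolding Lp_def Q_def LB_prop_prp N_def by simp
  have inner: "prp (Q \<mu> s) \<longlonglongrightarrow> lim (Lp \<mu> s)" if "2 \<le> s" for \<mu> s
    using inner_conv[OF K0 C1 that, of "restr \<mu> s"] unfolding LpQ[symmetric] Lp_def
    by (simp add: convergent_LIMSEQ_iff)
  have outer: "(\<lambda>s. lim (Lp (ext c) s)) \<longlonglongrightarrow> g (alpha c)" if b: "blk c" for c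
  proof -
    have F: "ext c \<in> Fstar" "ext c 1 = 1" using ext_Fstar[OF b] ext_1[OF b] by auto
    have "(\<lambda>s. lim (Lp (ext c) s)) \<longlonglongrightarrow> lim (\<lambda>s. lim (Lp (ext c) s))"
      using C2 F unfolding Lp_def by (simp add: convergent_LIMSEQ_iff)
    moreover have "lim (\<lambda>s. lim (Lp (ext c) s)) = g (alpha c)"
    proof -
      have "g (gphi * (dotF (ext c) - 1)) = lim (\<lambda>s. lim (LB_prop K s (\<lambda>x. lex_le x (restr (ext c) s))))"
        using gv F by blast
      then show ?thesis unfolding Lp_def alpha_def dotF_ext by simp
    qed
    ultimately show ?thesis by simp
  qed
  have cblk: "blk (restr (ext c) s) \<and> length (restr (ext c) s) = s" if b: "blk c" and s: "1 \<le> s" for c s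
    using restr_blk[OF ext_Fstar[OF b] ext_1[OF b] s] by simp
  have keyQ: "eventually (\<lambda>k. Q (ext c) s k \<longleftrightarrow> tt (K k) < bb (restr (ext c) s) (N k)) sequentially"
    if b: "blk c" and s: "1 \<le> s" for c s
  proof -
    have "eventually (\<lambda>k. Suc s \<le> N k) sequentially" using Ntop unfolding filterlim_at_top by blast
    moreover have "eventually (\<lambda>k. 1 \<le> k) sequentially" by (rule eventually_ge_at_top)
    ultimately show ?thesis
    proof eventually_elim
      case (elim k)
      then have m: "1 \<le> K k" using K0 by auto
      have "lex_le (take s (zeck (K k))) (restr (ext c) s) \<longleftrightarrow> tt (K k) < bb (restr (ext c) s) (N k)"
        using key_le_t[OF conjunct1[OF cblk[OF b s]] m] cblk[OF b s] elim N_def by simp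
      then show ?case unfolding Q_def using elim by auto
    qed
  qed
  have bbl: "(\<lambda>k. bb (restr (ext c) s) (N k)) \<longlonglongrightarrow> beta (restr (ext c) s)" if b: "blk c" and s: "1 \<le> s" for c s
    by (rule filterlim_compose[OF bb_lim[OF conjunct1[OF cblk[OF b s]]] Ntop])
  have beta_gt: "alpha c < beta (restr (ext c) s)" if b: "blk c" and s: "length c < s" for c s
  proof -
    have r: "restr (ext c) s = c @ replicate (s - length c) 0" using restr_ext s by simp
    have "chat (restr (ext c) s) = chat c" unfolding r chat_app0 ..
    moreover have "0 < gomega ^ (length (restr (ext c) s) - 1 + last (restr (ext c) s))" using gomega_pos by simp
    ultimately show ?thesis unfolding alpha_def beta_def using gphi_gt1 by simp
  qed
  have beta_lim: "(\<lambda>s. beta (restr (ext c) s)) \<longlonglongrightarrow> alpha c" if b: "blk c" for c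
    using beta_restr_lim[OF ext_Fstar[OF b] ext_1[OF b]] unfolding dotF_ext alpha_def .
  have main: "prp (\<lambda>k. tt (K k) \<le> \<gamma>) \<longlonglongrightarrow> g \<gamma>" if \<gamma>: "\<gamma> \<in> {0..1}" for \<gamma>
  proof (rule sand2)
    fix e :: real assume e: "e > 0"
    have e2: "e / 2 > 0" using e by simp
    obtain \<delta> where \<delta>: "\<delta> > 0" "\<And>y. y \<in> {0..1} \<Longrightarrow> dist y \<gamma> < \<delta> \<Longrightarrow> dist (g y) (g \<gamma>) < e / 2"
      using gc \<gamma> e2 unfolding continuous_on_iff by metis
    have up: "\<exists>Q2 L2. (prp Q2 \<longlonglongrightarrow> L2) \<and> L2 \<le> g \<gamma> + e \<and> eventually (\<lambda>k. tt (K k) \<le> \<gamma> \<longrightarrow> Q2 k) sequentially"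
    proof (cases "\<gamma> = 1")
      case True
      have "eventually (\<lambda>n. prp (\<lambda>k. True) n = 1) sequentially"
      proof (rule eventually_mono[OF eventually_ge_at_top[of 1]])
        fix n :: nat assume "1 \<le> n"
        have "{k \<in> {1..n}. True} = {1..n}" by auto
        then show "prp (\<lambda>k. True) n = 1" unfolding prp_def using \<open>1 \<le> n\<close> by simp
      qed
      then have "prp (\<lambda>k. True) \<longlonglongrightarrow> 1" by (rule tendsto_eventually)
      then show ?thesis using True g1 e by (intro exI[of _ "\<lambda>k. True"] exI[of _ 1]) auto
    next
      case False
      then have "\<gamma> < min 1 (\<gamma> + \<delta> / 2)" using \<gamma> \<delta> by auto
      then obtain c where c: "blk c" "\<gamma> < alpha c" "alpha c < min 1 (\<gamma> + \<delta> / 2)"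
        using density[of \<gamma> "min 1 (\<gamma> + \<delta> / 2)"] \<gamma> by auto
      have "dist (g (alpha c)) (g \<gamma>) < e / 2" using \<delta>(2)[of "alpha c"] c \<gamma> \<delta>(1) by (auto simp: dist_real_def)
      then have ga: "g (alpha c) < g \<gamma> + e / 2" unfolding dist_real_def abs_less_iff by linarith
      have "eventually (\<lambda>s. lim (Lp (ext c) s) < g \<gamma> + e / 2) sequentially"
        using order_tendstoD(2)[OF outer[OF c(1)] ga] .
      then obtain s where s: "lim (Lp (ext c) s) < g \<gamma> + e / 2" "s \<ge> Suc (Suc (length c))"
        using ev_obtain[of _ "\<lambda>_. True" "Suc (Suc (length c))"] by auto
      have s1: "1 \<le> s" "2 \<le> s" "length c < s" using s by auto
      have bg: "\<gamma> < beta (restr (ext c) s)" using beta_gt[OF c(1) s1(3)] c(2) by simp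
      have ev: "eventually (\<lambda>k. tt (K k) \<le> \<gamma> \<longrightarrow> Q (ext c) s k) sequentially"
        using keyQ[OF c(1) s1(1)] order_tendstoD(1)[OF bbl[OF c(1) s1(1)] bg]
        by eventually_elim auto
      show ?thesis using inner[OF s1(2), of "ext c"] s(1) ev e by (intro exI[of _ "Q (ext c) s"] exI[of _ "lim (Lp (ext c) s)"]) auto
    qed
    have lo: "\<exists>Q1 L1. (prp Q1 \<longlonglongrightarrow> L1) \<and> g \<gamma> - e \<le> L1 \<and> eventually (\<lambda>k. Q1 k \<longrightarrow> tt (K k) \<le> \<gamma>) sequentially"
    proof (cases "\<gamma> = 0")
      case True
      have "prp (\<lambda>k. False) = (\<lambda>n. 0)" by (rule ext) (simp add: prp_def)
      then have "prp (\<lambda>k. False) \<longlonglongrightarrow> 0" by simp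
      then show ?thesis using True g0 e by (intro exI[of _ "\<lambda>k. False"] exI[of _ 0]) auto
    next
      case False
      then have "max 0 (\<gamma> - \<delta> / 2) < \<gamma>" using \<gamma> \<delta> by auto
      then obtain c where c: "blk c" "max 0 (\<gamma> - \<delta> / 2) < alpha c" "alpha c < \<gamma>"
        using density[of "max 0 (\<gamma> - \<delta> / 2)" \<gamma>] \<gamma> by auto
      have "dist (g (alpha c)) (g \<gamma>) < e / 2" using \<delta>(2)[of "alpha c"] c \<gamma> \<delta>(1) by (auto simp: dist_real_def)
      then have ga: "g \<gamma> - e < g (alpha c)" unfolding dist_real_def abs_less_iff using e by linarith
      have ev1: "eventually (\<lambda>s. g \<gamma> - e < lim (Lp (ext c) s)) sequentially"
        using order_tendstoD(1)[OF outer[OF c(1)] ga] .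
      have ev2: "eventually (\<lambda>s. beta (restr (ext c) s) < \<gamma>) sequentially"
        using order_tendstoD(2)[OF beta_lim[OF c(1)] c(3)] .
      obtain s where s: "g \<gamma> - e < lim (Lp (ext c) s)" "beta (restr (ext c) s) < \<gamma>" "s \<ge> Suc (Suc (length c))"
        using ev_obtain[OF ev1 ev2, of "Suc (Suc (length c))"] by blast
      have s1: "1 \<le> s" "2 \<le> s" "length c < s" using s by auto
      have ev: "eventually (\<lambda>k. Q (ext c) s k \<longrightarrow> tt (K k) \<le> \<gamma>) sequentially"
        using keyQ[OF c(1) s1(1)] order_tendstoD(2)[OF bbl[OF c(1) s1(1)] s(2)]
        by eventually_elim auto
      show ?thesis using inner[OF s1(2), of "ext c"] s(1) ev by (intro exI[of _ "Q (ext c) s"] exI[of _ "lim (Lp (ext c) s)"]) auto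
    qed
    from up lo show "\<exists>Q1 Q2 L1 L2. (prp Q1 \<longlonglongrightarrow> L1) \<and> g \<gamma> - e \<le> L1 \<and> (prp Q2 \<longlonglongrightarrow> L2) \<and> L2 \<le> g \<gamma> + e \<and>
      eventually (\<lambda>k. Q1 k \<longrightarrow> tt (K k) \<le> \<gamma>) sequentially \<and> eventually (\<lambda>k. tt (K k) \<le> \<gamma> \<longrightarrow> Q2 k) sequentially"
      by blast
  qed
  define f where "f = mkf (Hinv g)"
  have hh: "hgood (Hinv g)" unfolding hgood_def
  proof (intro conjI)
    show "continuous_on {0..1} (Hinv g)" using H_cont[OF hg] by (rule continuous_on_subset) simp
    show "strict_mono_on {0..1} (Hinv g)" using H_strict[OF hg] by (auto intro: strict_mono_onI)
    show "Hinv g 0 = 0" by (rule H0[OF hg])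
    show "Hinv g 1 = 1" by (rule H1[OF hg])
  qed
  have uc: "uniform_continuation f" unfolding f_def by (rule mkf_uc[OF hh])
  have eqd: "equidistributed (\<lambda>n. the_inv_into {1..} f (real (K n)))"
    unfolding equidistributed_def
  proof
    fix \<beta> :: real assume \<beta>: "\<beta> \<in> {0..1}"
    have "prp (\<lambda>k. frac (the_inv_into {1..} f (real (K k))) \<le> \<beta>) = prp (\<lambda>k. tt (K k) \<le> Hinv g \<beta>)"
    proof (rule prp_cong)
      fix k :: nat assume "1 \<le> k"
      then have m: "1 \<le> K k" using K0 by auto
      have "frac (the_inv_into {1..} f (real (K k))) = g (tt (K k))" unfolding f_def by (rule inv_mkf[OF hg m])
      moreover have "g (tt (K k)) \<le> \<beta> \<longleftrightarrow> tt (K k) \<le> Hinv g \<beta>"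
        using H_le_iff[OF hg, of "tt (K k)" \<beta>] tt_range[OF m] \<beta> by auto
      ultimately show "(frac (the_inv_into {1..} f (real (K k))) \<le> \<beta>) = (tt (K k) \<le> Hinv g \<beta>)" by simp
    qed
    moreover have "prp (\<lambda>k. tt (K k) \<le> Hinv g \<beta>) \<longlonglongrightarrow> g (Hinv g \<beta>)" using main[OF H_range[OF hg]] .
    moreover have "g (Hinv g \<beta>) = \<beta>" using h_H[OF hg] clmp_id[OF \<beta>] by simp
    ultimately show "(\<lambda>n. real (card {k \<in> {1..n}. frac (the_inv_into {1..} f (real (K k))) \<le> \<beta>}) / real n) \<longlonglongrightarrow> \<beta>"
      unfolding prp_def by simp
  qed
  show ?thesis using uc eqd by blast
qed

theorem theorem5p19:
  fixes K :: "nat \<Rightarrow> nat"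
  assumes "\<forall>k\<ge>1. K k > 0"
    and "filterlim K at_top sequentially"
  shows "cont_LB_dist K \<longleftrightarrow>
    (\<exists>f. uniform_continuation f \<and>
         equidistributed (\<lambda>n. the_inv_into {1..} f (real (K n))))"
proof
  assume "cont_LB_dist K"
  then show "\<exists>f. uniform_continuation f \<and> equidistributed (\<lambda>n. the_inv_into {1..} f (real (K n)))"
    using dir2 assms by blast
next
  assume "\<exists>f. uniform_continuation f \<and> equidistributed (\<lambda>n. the_inv_into {1..} f (real (K n)))"
  then obtain f where "uniform_continuation f" "equidistributed (\<lambda>n. the_inv_into {1..} f (real (K n)))" by blast
  then show "cont_LB_dist K" using dir1 assms by blast
qed

end
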